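(* Let $\mathcal C$ be a hyper-extensive category with finite products and terminal object $1$, and let $N=\coprod_{n<\omega}1$. Then $N$, with $\mathrm{inj}_0\colon1\to N$ and $[\mathrm{inj}_{n+1}]_{n<\omega}\colon N\to N$, is a natural numbers object (an initial algebra for $1+(-)$), and for every object $Y$ the free cia for the identity functor $\mathrm{Id}$ on $Y$ (equivalently, the terminal coalgebra for $(-)+Y$) is $TY\cong N\times Y+1$.
   Context: Hyper-extensive category: countable coproducts that are universal (pullbacks along arbitrary morphisms exist and preserve them), disjoint (injections monic, pairwise pullbacks initial), and coherent (a countable family of pairwise disjoint coproduct injections has copairing a coproduct injection). For an endofunctor $G$, an algebra $a\colon GA\to A$ is a cia if every $e\colon X\to GX+A$ admits a unique $s$ with $s=[a,\mathrm{id}_A]\cdot(Gs+\mathrm{id}_A)\cdot e$; a free cia on $Y$ is a cia with a morphism from $Y$ through which every morphism from $Y$ into a cia factors uniquely via an algebra morphism. *)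

theory Defs
  imports Main
begin

text \<open>A category whose objects are the elements of type 'o and whose morphisms are
  the elements of type 'm. Composition ccomp g f means g after f.\<close>

record ('o, 'm) cat =
  cdom  :: "'m \<Rightarrow> 'o"
  ccod  :: "'m \<Rightarrow> 'o"
  cid   :: "'o \<Rightarrow> 'm"
  ccomp :: "'m \<Rightarrow> 'm \<Rightarrow> 'm"

definition is_category :: "('o, 'm) cat \<Rightarrow> bool" where
  "is_category C \<longleftrightarrow>
     (\<forall>A. cdom C (cid C A) = A \<and> ccod C (cid C A) = A) \<and>
     (\<forall>f g. ccod C f = cdom C g \<longrightarrow>
        cdom C (ccomp C g f) = cdom C f \<and> ccod C (ccomp C g f) = ccod C g) \<and>
     (\<forall>f. ccomp C f (cid C (cdom C f)) = f \<and> ccomp C (cid C (ccod C f)) f = f) \<and>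
     (\<forall>f g h. ccod C f = cdom C g \<and> ccod C g = cdom C h \<longrightarrow>
        ccomp C h (ccomp C g f) = ccomp C (ccomp C h g) f)"

definition hom :: "('o, 'm) cat \<Rightarrow> 'o \<Rightarrow> 'o \<Rightarrow> 'm set" where
  "hom C A B = {f. cdom C f = A \<and> ccod C f = B}"

definition initial_obj :: "('o, 'm) cat \<Rightarrow> 'o \<Rightarrow> bool" where
  "initial_obj C Z \<longleftrightarrow> (\<forall>A. \<exists>!f. f \<in> hom C Z A)"

definition terminal_obj :: "('o, 'm) cat \<Rightarrow> 'o \<Rightarrow> bool" where
  "terminal_obj C T \<longleftrightarrow> (\<forall>A. \<exists>!f. f \<in> hom C A T)"

definition monic :: "('o, 'm) cat \<Rightarrow> 'm \<Rightarrow> bool" where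
  "monic C f \<longleftrightarrow> (\<forall>g h. ccod C g = cdom C f \<and> ccod C h = cdom C f \<and> cdom C g = cdom C h \<and>
                         ccomp C f g = ccomp C f h \<longrightarrow> g = h)"

text \<open>Coproduct of a family X indexed by a set I of naturals (this covers all countable
  index sets up to bijection), with injections iota.\<close>

definition is_coproduct ::
  "('o, 'm) cat \<Rightarrow> nat set \<Rightarrow> (nat \<Rightarrow> 'o) \<Rightarrow> 'o \<Rightarrow> (nat \<Rightarrow> 'm) \<Rightarrow> bool" where
  "is_coproduct C I X S \<iota> \<longleftrightarrow>
     (\<forall>n\<in>I. \<iota> n \<in> hom C (X n) S) \<and>
     (\<forall>Z f. (\<forall>n\<in>I. f n \<in> hom C (X n) Z) \<longrightarrow>
        (\<exists>!h. h \<in> hom C S Z \<and> (\<forall>n\<in>I. ccomp C h (\<iota> n) = f n)))"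

definition is_bin_coproduct :: "('o, 'm) cat \<Rightarrow> 'o \<Rightarrow> 'o \<Rightarrow> 'o \<Rightarrow> 'm \<Rightarrow> 'm \<Rightarrow> bool" where
  "is_bin_coproduct C A B S i j \<longleftrightarrow>
     i \<in> hom C A S \<and> j \<in> hom C B S \<and>
     (\<forall>Z f g. f \<in> hom C A Z \<and> g \<in> hom C B Z \<longrightarrow>
        (\<exists>!h. h \<in> hom C S Z \<and> ccomp C h i = f \<and> ccomp C h j = g))"

definition is_product :: "('o, 'm) cat \<Rightarrow> 'o \<Rightarrow> 'o \<Rightarrow> 'o \<Rightarrow> 'm \<Rightarrow> 'm \<Rightarrow> bool" where
  "is_product C A B P p1 p2 \<longleftrightarrow>
     p1 \<in> hom C P A \<and> p2 \<in> hom C P B \<and>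
     (\<forall>Z f g. f \<in> hom C Z A \<and> g \<in> hom C Z B \<longrightarrow>
        (\<exists>!h. h \<in> hom C Z P \<and> ccomp C p1 h = f \<and> ccomp C p2 h = g))"

definition has_binary_products :: "('o, 'm) cat \<Rightarrow> bool" where
  "has_binary_products C \<longleftrightarrow> (\<forall>A B. \<exists>P p1 p2. is_product C A B P p1 p2)"

definition is_pullback :: "('o, 'm) cat \<Rightarrow> 'm \<Rightarrow> 'm \<Rightarrow> 'o \<Rightarrow> 'm \<Rightarrow> 'm \<Rightarrow> bool" where
  "is_pullback C f g P p q \<longleftrightarrow>
     ccod C f = ccod C g \<and>
     p \<in> hom C P (cdom C f) \<and> q \<in> hom C P (cdom C g) \<and>
     ccomp C f p = ccomp C g q \<and>
     (\<forall>Q p' q'. p' \<in> hom C Q (cdom C f) \<and> q' \<in> hom C Q (cdom C g) \<and>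
                ccomp C f p' = ccomp C g q' \<longrightarrow>
        (\<exists>!u. u \<in> hom C Q P \<and> ccomp C p u = p' \<and> ccomp C q u = q'))"

definition has_countable_coproducts :: "('o, 'm) cat \<Rightarrow> bool" where
  "has_countable_coproducts C \<longleftrightarrow> (\<forall>(I::nat set) X. \<exists>S \<iota>. is_coproduct C I X S \<iota>)"

definition universal_coproducts :: "('o, 'm) cat \<Rightarrow> bool" where
  "universal_coproducts C \<longleftrightarrow>
     (\<forall>I X S \<iota>. is_coproduct C I X S \<iota> \<longrightarrow>
       (\<forall>Y h. h \<in> hom C Y S \<longrightarrow>
          (\<forall>n\<in>I. \<exists>P p q. is_pullback C (\<iota> n) h P p q) \<and>
          (\<forall>P p q. (\<forall>n\<in>I. is_pullback C (\<iota> n) h (P n) (p n) (q n)) \<longrightarrow>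
                    is_coproduct C I P Y q)))"

definition disjoint_pair :: "('o, 'm) cat \<Rightarrow> 'm \<Rightarrow> 'm \<Rightarrow> bool" where
  "disjoint_pair C f g \<longleftrightarrow> (\<exists>P p q. is_pullback C f g P p q \<and> initial_obj C P)"

definition disjoint_coproducts :: "('o, 'm) cat \<Rightarrow> bool" where
  "disjoint_coproducts C \<longleftrightarrow>
     (\<forall>I X S \<iota>. is_coproduct C I X S \<iota> \<longrightarrow>
        (\<forall>n\<in>I. monic C (\<iota> n)) \<and>
        (\<forall>n\<in>I. \<forall>m\<in>I. n \<noteq> m \<longrightarrow> disjoint_pair C (\<iota> n) (\<iota> m)))"

definition coproduct_injection :: "('o, 'm) cat \<Rightarrow> 'm \<Rightarrow> bool" where
  "coproduct_injection C m \<longleftrightarrow>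
     (\<exists>A' m'. is_bin_coproduct C (cdom C m) A' (ccod C m) m m')"

definition coherent_coproducts :: "('o, 'm) cat \<Rightarrow> bool" where
  "coherent_coproducts C \<longleftrightarrow>
     (\<forall>I A B m. (\<forall>n\<in>I. m n \<in> hom C (A n) B \<and> coproduct_injection C (m n)) \<and>
                (\<forall>n\<in>I. \<forall>k\<in>I. n \<noteq> k \<longrightarrow> disjoint_pair C (m n) (m k)) \<longrightarrow>
        (\<forall>S \<iota> h. is_coproduct C I A S \<iota> \<and> h \<in> hom C S B \<and>
                  (\<forall>n\<in>I. ccomp C h (\<iota> n) = m n) \<longrightarrow> coproduct_injection C h))"

definition hyper_extensive :: "('o, 'm) cat \<Rightarrow> bool" where
  "hyper_extensive C \<longleftrightarrow> is_category C \<and> has_countable_coproducts C \<and>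
     universal_coproducts C \<and> disjoint_coproducts C \<and> coherent_coproducts C"

text \<open>A chosen binary coproduct A+B (exists whenever countable coproducts exist;
  the choice is irrelevant up to isomorphism), copairing and the functor
  action f+g.\<close>

definition bcop :: "('o, 'm) cat \<Rightarrow> 'o \<Rightarrow> 'o \<Rightarrow> 'o \<times> 'm \<times> 'm" where
  "bcop C A B = (SOME (S, i, j). is_bin_coproduct C A B S i j)"

definition cop_obj :: "('o, 'm) cat \<Rightarrow> 'o \<Rightarrow> 'o \<Rightarrow> 'o" where
  "cop_obj C A B = fst (bcop C A B)"

definition cop_inl :: "('o, 'm) cat \<Rightarrow> 'o \<Rightarrow> 'o \<Rightarrow> 'm" where
  "cop_inl C A B = fst (snd (bcop C A B))"

definition cop_inr :: "('o, 'm) cat \<Rightarrow> 'o \<Rightarrow> 'o \<Rightarrow> 'm" where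
  "cop_inr C A B = snd (snd (bcop C A B))"

definition copair :: "('o, 'm) cat \<Rightarrow> 'm \<Rightarrow> 'm \<Rightarrow> 'm" where
  "copair C f g = (THE h. h \<in> hom C (cop_obj C (cdom C f) (cdom C g)) (ccod C f) \<and>
                         ccomp C h (cop_inl C (cdom C f) (cdom C g)) = f \<and>
                         ccomp C h (cop_inr C (cdom C f) (cdom C g)) = g)"

definition cop_map :: "('o, 'm) cat \<Rightarrow> 'm \<Rightarrow> 'm \<Rightarrow> 'm" where
  "cop_map C f g = copair C (ccomp C (cop_inl C (ccod C f) (ccod C g)) f)
                            (ccomp C (cop_inr C (ccod C f) (ccod C g)) g)"

definition initial_alg_one_plus :: "('o, 'm) cat \<Rightarrow> 'o \<Rightarrow> 'o \<Rightarrow> 'm \<Rightarrow> bool" where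
  "initial_alg_one_plus C one N a \<longleftrightarrow>
     a \<in> hom C (cop_obj C one N) N \<and>
     (\<forall>B b. b \<in> hom C (cop_obj C one B) B \<longrightarrow>
        (\<exists>!h. h \<in> hom C N B \<and> ccomp C h a = ccomp C b (cop_map C (cid C one) h)))"

definition is_cia_Id :: "('o, 'm) cat \<Rightarrow> 'o \<Rightarrow> 'm \<Rightarrow> bool" where
  "is_cia_Id C A a \<longleftrightarrow>
     a \<in> hom C A A \<and>
     (\<forall>X e. e \<in> hom C X (cop_obj C X A) \<longrightarrow>
        (\<exists>!s. s \<in> hom C X A \<and>
              s = ccomp C (copair C a (cid C A)) (ccomp C (cop_map C s (cid C A)) e)))"

definition is_free_cia_Id :: "('o, 'm) cat \<Rightarrow> 'o \<Rightarrow> 'o \<Rightarrow> 'm \<Rightarrow> 'm \<Rightarrow> bool" where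
  "is_free_cia_Id C Y T a \<eta> \<longleftrightarrow>
     is_cia_Id C T a \<and> \<eta> \<in> hom C Y T \<and>
     (\<forall>B b f. is_cia_Id C B b \<and> f \<in> hom C Y B \<longrightarrow>
        (\<exists>!h. h \<in> hom C T B \<and> ccomp C h a = ccomp C b h \<and> ccomp C h \<eta> = f))"

definition terminal_coalg_plus :: "('o, 'm) cat \<Rightarrow> 'o \<Rightarrow> 'o \<Rightarrow> 'm \<Rightarrow> bool" where
  "terminal_coalg_plus C Y T c \<longleftrightarrow>
     c \<in> hom C T (cop_obj C T Y) \<and>
     (\<forall>X e. e \<in> hom C X (cop_obj C X Y) \<longrightarrow>
        (\<exists>!h. h \<in> hom C X T \<and> ccomp C c h = ccomp C (cop_map C h (cid C Y)) e))"

end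

theory Submission
  imports Defs
begin

locale hx =
  fixes C :: "('o,'m) cat"
  assumes hx: "hyper_extensive C"
begin

abbreviation cmp (infixr "\<cdot>" 55) where "g \<cdot> f \<equiv> ccomp C g f"
abbreviation dm where "dm f \<equiv> cdom C f"
abbreviation cd where "cd f \<equiv> ccod C f"

lemma ex1_uniq: "\<exists>!x. P x \<Longrightarrow> P a \<Longrightarrow> P b \<Longrightarrow> a = b" by blast

lemma cat: "is_category C" using hx by (simp add: hyper_extensive_def)

lemma hom_iff[simp]: "f \<in> hom C A B \<longleftrightarrow> dm f = A \<and> cd f = B" by (simp add: hom_def)

lemma dom_id[simp]: "dm (cid C A) = A" and cod_id[simp]: "cd (cid C A) = A"
  using cat by (auto simp: is_category_def)
lemma dom_comp[simp]: "cd f = dm g \<Longrightarrow> dm (g \<cdot> f) = dm f"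
  using cat by (auto simp: is_category_def)
lemma cod_comp[simp]: "cd f = dm g \<Longrightarrow> cd (g \<cdot> f) = cd g"
  using cat by (auto simp: is_category_def)
lemma id_r[simp]: "dm f = A \<Longrightarrow> f \<cdot> cid C A = f"
  using cat by (auto simp: is_category_def)
lemma id_l[simp]: "cd f = A \<Longrightarrow> cid C A \<cdot> f = f"
  using cat by (auto simp: is_category_def)
lemma assoc[simp]: "cd f = dm g \<Longrightarrow> cd g = dm h \<Longrightarrow> (h \<cdot> g) \<cdot> f = h \<cdot> (g \<cdot> f)"
  using cat unfolding is_category_def by metis
lemma rewr: "g \<cdot> f = k \<Longrightarrow> cd f = dm g \<Longrightarrow> cd z = dm f \<Longrightarrow> g \<cdot> (f \<cdot> z) = k \<cdot> z"
  by (metis assoc)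


lemma cop_inj: "is_coproduct C I X S \<iota> \<Longrightarrow> n \<in> I \<Longrightarrow> \<iota> n \<in> hom C (X n) S"
  unfolding is_coproduct_def by (elim conjE) blast

lemma cop_univ:
  assumes "is_coproduct C I X S \<iota>" "\<And>n. n \<in> I \<Longrightarrow> f n \<in> hom C (X n) Z"
  shows "\<exists>h. h \<in> hom C S Z \<and> (\<forall>n\<in>I. h \<cdot> \<iota> n = f n)"
proof -
  have H: "\<forall>Z f. (\<forall>n\<in>I. f n \<in> hom C (X n) Z) \<longrightarrow> (\<exists>!h. h \<in> hom C S Z \<and> (\<forall>n\<in>I. h \<cdot> \<iota> n = f n))"
    using assms(1) unfolding is_coproduct_def by (elim conjE)
  have "\<exists>!h. h \<in> hom C S Z \<and> (\<forall>n\<in>I. h \<cdot> \<iota> n = f n)"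
    by (rule H[rule_format]) (use assms(2) in blast)
  then show ?thesis by (rule ex1_implies_ex)
qed

lemma cop_uniq:
  assumes "is_coproduct C I X S \<iota>" "h \<in> hom C S Z" "h' \<in> hom C S Z" "\<And>n. n \<in> I \<Longrightarrow> h \<cdot> \<iota> n = h' \<cdot> \<iota> n"
  shows "h = h'"
proof -
  let ?f = "\<lambda>n. h \<cdot> \<iota> n"
  have H: "\<forall>Z f. (\<forall>n\<in>I. f n \<in> hom C (X n) Z) \<longrightarrow> (\<exists>!h. h \<in> hom C S Z \<and> (\<forall>n\<in>I. h \<cdot> \<iota> n = f n))"
    using assms(1) unfolding is_coproduct_def by (elim conjE)
  have "\<exists>!k. k \<in> hom C S Z \<and> (\<forall>n\<in>I. k \<cdot> \<iota> n = ?f n)"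
    by (rule H[rule_format]) (use assms(2) cop_inj[OF assms(1)] in auto)
  then show ?thesis using assms(2,3,4) by (metis (no_types, lifting))
qed

lemma cop_intro:
  assumes "\<And>n. n \<in> I \<Longrightarrow> \<iota> n \<in> hom C (X n) S"
    "\<And>Z f. (\<And>n. n \<in> I \<Longrightarrow> f n \<in> hom C (X n) Z) \<Longrightarrow> \<exists>h. h \<in> hom C S Z \<and> (\<forall>n\<in>I. h \<cdot> \<iota> n = f n)"
    "\<And>Z h h'. h \<in> hom C S Z \<Longrightarrow> h' \<in> hom C S Z \<Longrightarrow> (\<And>n. n \<in> I \<Longrightarrow> h \<cdot> \<iota> n = h' \<cdot> \<iota> n) \<Longrightarrow> h = h'"
  shows "is_coproduct C I X S \<iota>"
  unfolding is_coproduct_def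
proof (intro conjI allI impI ballI)
  show "\<And>n. n \<in> I \<Longrightarrow> \<iota> n \<in> hom C (X n) S" by (rule assms(1))
  fix Z f assume "\<forall>n\<in>I. f n \<in> hom C (X n) Z"
  then obtain h where h: "h \<in> hom C S Z \<and> (\<forall>n\<in>I. h \<cdot> \<iota> n = f n)" using assms(2) by blast
  show "\<exists>!h. h \<in> hom C S Z \<and> (\<forall>n\<in>I. h \<cdot> \<iota> n = f n)"
  proof (rule ex1I[of _ h])
    show "h \<in> hom C S Z \<and> (\<forall>n\<in>I. h \<cdot> \<iota> n = f n)" by (rule h)
    fix k assume "k \<in> hom C S Z \<and> (\<forall>n\<in>I. k \<cdot> \<iota> n = f n)"
    then show "k = h" using h assms(3)[of k Z h] by auto
  qed
qed

lemma bin_inj: "is_bin_coproduct C A B S i j \<Longrightarrow> i \<in> hom C A S"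
  "is_bin_coproduct C A B S i j \<Longrightarrow> j \<in> hom C B S"
  unfolding is_bin_coproduct_def by (elim conjE, assumption)+

lemma bin_univ:
  assumes "is_bin_coproduct C A B S i j" "f \<in> hom C A Z" "g \<in> hom C B Z"
  shows "\<exists>h. h \<in> hom C S Z \<and> h \<cdot> i = f \<and> h \<cdot> j = g"
proof -
  have H: "\<forall>Z f g. f \<in> hom C A Z \<and> g \<in> hom C B Z \<longrightarrow> (\<exists>!h. h \<in> hom C S Z \<and> h \<cdot> i = f \<and> h \<cdot> j = g)"
    using assms(1) unfolding is_bin_coproduct_def by (elim conjE)
  have "\<exists>!h. h \<in> hom C S Z \<and> h \<cdot> i = f \<and> h \<cdot> j = g"
    by (rule H[rule_format]) (use assms in blast)
  then show ?thesis by (rule ex1_implies_ex)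
qed

lemma bin_intro:
  assumes "i \<in> hom C A S" "j \<in> hom C B S"
    "\<And>Z f g. f \<in> hom C A Z \<Longrightarrow> g \<in> hom C B Z \<Longrightarrow> \<exists>h. h \<in> hom C S Z \<and> h \<cdot> i = f \<and> h \<cdot> j = g"
    "\<And>Z h h'. h \<in> hom C S Z \<Longrightarrow> h' \<in> hom C S Z \<Longrightarrow> h \<cdot> i = h' \<cdot> i \<Longrightarrow> h \<cdot> j = h' \<cdot> j \<Longrightarrow> h = h'"
  shows "is_bin_coproduct C A B S i j"
  unfolding is_bin_coproduct_def
proof (intro conjI allI impI)
  show "i \<in> hom C A S" "j \<in> hom C B S" by (rule assms)+
  fix Z f g assume "f \<in> hom C A Z \<and> g \<in> hom C B Z"
  then obtain h where h: "h \<in> hom C S Z \<and> h \<cdot> i = f \<and> h \<cdot> j = g" using assms(3) by blast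
  show "\<exists>!h. h \<in> hom C S Z \<and> h \<cdot> i = f \<and> h \<cdot> j = g"
  proof (rule ex1I[of _ h])
    show "h \<in> hom C S Z \<and> h \<cdot> i = f \<and> h \<cdot> j = g" by (rule h)
    fix k assume "k \<in> hom C S Z \<and> k \<cdot> i = f \<and> k \<cdot> j = g"
    then show "k = h" using h assms(4)[of k Z h] by auto
  qed
qed

lemma bin_ext:
  assumes "is_bin_coproduct C A B S i j" "h \<in> hom C S Z" "h' \<in> hom C S Z"
    "h \<cdot> i = h' \<cdot> i" "h \<cdot> j = h' \<cdot> j"
  shows "h = h'"
proof -
  have H: "\<forall>Z f g. f \<in> hom C A Z \<and> g \<in> hom C B Z \<longrightarrow> (\<exists>!h. h \<in> hom C S Z \<and> h \<cdot> i = f \<and> h \<cdot> j = g)"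
    using assms(1) unfolding is_bin_coproduct_def by (elim conjE)
  have "\<exists>!k. k \<in> hom C S Z \<and> k \<cdot> i = h \<cdot> i \<and> k \<cdot> j = h \<cdot> j"
    by (rule H[rule_format]) (use assms bin_inj[OF assms(1)] in auto)
  then show ?thesis using assms(2-5) by metis
qed

lemma bin2nat:
  assumes "is_bin_coproduct C A B S i j"
  shows "is_coproduct C {0,1} (\<lambda>n. if n=0 then A else B) S (\<lambda>n. if n=0 then i else j)"
proof (rule cop_intro)
  show "\<And>n. n \<in> {0, 1} \<Longrightarrow> (if n = 0 then i else j) \<in> hom C (if n = 0 then A else B) S"
    using bin_inj[OF assms] by auto
  fix Z f assume f: "\<And>n. n \<in> {0::nat, 1} \<Longrightarrow> f n \<in> hom C (if n = 0 then A else B) Z"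
  have "f 0 \<in> hom C A Z" "f 1 \<in> hom C B Z" using f[of 0] f[of 1] by auto
  then obtain h where "h \<in> hom C S Z \<and> h \<cdot> i = f 0 \<and> h \<cdot> j = f 1" using bin_univ[OF assms] by blast
  then show "\<exists>h. h \<in> hom C S Z \<and> (\<forall>n\<in>{0, 1}. h \<cdot> (if n = 0 then i else j) = f n)"
    by (intro exI[of _ h]) auto
next
  fix Z h h' assume a: "h \<in> hom C S Z" "h' \<in> hom C S Z"
    and e: "\<And>n. n \<in> {0::nat, 1} \<Longrightarrow> h \<cdot> (if n = 0 then i else j) = h' \<cdot> (if n = 0 then i else j)"
  have "h \<cdot> i = h' \<cdot> i" using e[of 0] by simp
  moreover have "h \<cdot> j = h' \<cdot> j" using e[of 1] by simp
  ultimately show "h = h'" using bin_ext[OF assms a] by blast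
qed

lemma nat2bin:
  assumes "is_coproduct C {0,1} X S \<iota>"
  shows "is_bin_coproduct C (X 0) (X 1) S (\<iota> 0) (\<iota> 1)"
proof -
  have *: "\<And>P. (\<forall>n\<in>{0::nat,1}. P n) \<longleftrightarrow> P 0 \<and> P 1" by auto
  show ?thesis unfolding is_bin_coproduct_def
  proof (intro conjI allI impI)
    have "\<forall>n\<in>{0,1}. \<iota> n \<in> hom C (X n) S" using assms unfolding is_coproduct_def by (elim conjE)
    then show "\<iota> 0 \<in> hom C (X 0) S" "\<iota> 1 \<in> hom C (X 1) S" by blast+
    fix Z f g assume fg: "f \<in> hom C (X 0) Z \<and> g \<in> hom C (X 1) Z"
    let ?F = "\<lambda>n::nat. if n = 0 then f else g"
    have F1: "\<forall>n\<in>{0,1}. ?F n \<in> hom C (X n) Z" using fg by auto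
    have H: "\<forall>Z f. (\<forall>n\<in>{0,1}. f n \<in> hom C (X n) Z) \<longrightarrow>
        (\<exists>!h. h \<in> hom C S Z \<and> (\<forall>n\<in>{0,1}. h \<cdot> \<iota> n = f n))"
      using assms unfolding is_coproduct_def by (elim conjE)
    have "\<exists>!h. h \<in> hom C S Z \<and> (\<forall>n\<in>{0,1}. h \<cdot> \<iota> n = ?F n)"
      by (rule H[rule_format]) (use F1 in blast)
    then show "\<exists>!h. h \<in> hom C S Z \<and> h \<cdot> \<iota> 0 = f \<and> h \<cdot> \<iota> 1 = g" unfolding * by simp
  qed
qed

lemma bin_swap: "is_bin_coproduct C A B S i j \<Longrightarrow> is_bin_coproduct C B A S j i"
  unfolding is_bin_coproduct_def by blast

lemma bin_ex: "\<exists>S i j. is_bin_coproduct C A B S i j"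
proof -
  have "has_countable_coproducts C" using hx by (simp add: hyper_extensive_def)
  then obtain S \<iota> where "is_coproduct C {0,1} (\<lambda>n. if n=0 then A else B) S \<iota>"
    unfolding has_countable_coproducts_def by blast
  from nat2bin[OF this] show ?thesis by auto
qed

lemma bcop: "is_bin_coproduct C A B (cop_obj C A B) (cop_inl C A B) (cop_inr C A B)"
proof -
  have "\<exists>x. (case x of (S,i,j) \<Rightarrow> is_bin_coproduct C A B S i j)" using bin_ex by auto
  then have "case bcop C A B of (S,i,j) \<Rightarrow> is_bin_coproduct C A B S i j"
    unfolding bcop_def by (rule someI_ex)
  then show ?thesis unfolding cop_obj_def cop_inl_def cop_inr_def by (auto split: prod.splits)
qed

lemma inl_dom[simp]: "dm (cop_inl C A B) = A" and inl_cod[simp]: "cd (cop_inl C A B) = cop_obj C A B"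
  and inr_dom[simp]: "dm (cop_inr C A B) = B" and inr_cod[simp]: "cd (cop_inr C A B) = cop_obj C A B"
  using bcop[of A B] by (auto simp: is_bin_coproduct_def)

lemma cop_ext:
  assumes "h \<in> hom C (cop_obj C A B) Z" "h' \<in> hom C (cop_obj C A B) Z"
    "h \<cdot> cop_inl C A B = h' \<cdot> cop_inl C A B" "h \<cdot> cop_inr C A B = h' \<cdot> cop_inr C A B"
  shows "h = h'" using bin_ext[OF bcop assms] .

lemma copair:
  assumes "f \<in> hom C A Z" "g \<in> hom C B Z"
  shows "copair C f g \<in> hom C (cop_obj C A B) Z" "copair C f g \<cdot> cop_inl C A B = f"
    "copair C f g \<cdot> cop_inr C A B = g"
proof -
  have ex: "\<exists>!h. h \<in> hom C (cop_obj C A B) Z \<and> h \<cdot> cop_inl C A B = f \<and> h \<cdot> cop_inr C A B = g"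
    using bcop[of A B] assms unfolding is_bin_coproduct_def by blast
  have "copair C f g = (THE h. h \<in> hom C (cop_obj C A B) Z \<and> h \<cdot> cop_inl C A B = f \<and> h \<cdot> cop_inr C A B = g)"
    using assms unfolding copair_def by simp
  with theI'[OF ex] show "copair C f g \<in> hom C (cop_obj C A B) Z" "copair C f g \<cdot> cop_inl C A B = f"
    "copair C f g \<cdot> cop_inr C A B = g" by auto
qed

lemma copair_dom[simp]: "cd f = cd g \<Longrightarrow> dm (copair C f g) = cop_obj C (dm f) (dm g)"
  using copair(1)[of f "dm f" "cd f" g "dm g"] by simp
lemma copair_cod[simp]: "cd f = cd g \<Longrightarrow> cd (copair C f g) = cd f"
  using copair(1)[of f "dm f" "cd f" g "dm g"] by simp
lemma copair_inl[simp]: "cd f = cd g \<Longrightarrow> A = dm f \<Longrightarrow> B = dm g \<Longrightarrow> copair C f g \<cdot> cop_inl C A B = f"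
  using copair(2)[of f "dm f" "cd f" g "dm g"] by simp
lemma copair_inr[simp]: "cd f = cd g \<Longrightarrow> A = dm f \<Longrightarrow> B = dm g \<Longrightarrow> copair C f g \<cdot> cop_inr C A B = g"
  using copair(3)[of f "dm f" "cd f" g "dm g"] by simp

lemma cop_map_dom[simp]: "dm (cop_map C f g) = cop_obj C (dm f) (dm g)"
  and cop_map_cod[simp]: "cd (cop_map C f g) = cop_obj C (cd f) (cd g)"
  unfolding cop_map_def by simp_all
lemma cop_map_inl[simp]: "A = dm f \<Longrightarrow> B = dm g \<Longrightarrow> cop_map C f g \<cdot> cop_inl C A B = cop_inl C (cd f) (cd g) \<cdot> f"
  and cop_map_inr[simp]: "A = dm f \<Longrightarrow> B = dm g \<Longrightarrow> cop_map C f g \<cdot> cop_inr C A B = cop_inr C (cd f) (cd g) \<cdot> g"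
  unfolding cop_map_def by simp_all

subsection \<open>Initial objects and pullbacks\<close>

lemma init_ex: "initial_obj C Z \<Longrightarrow> \<exists>f. f \<in> hom C Z A"
  unfolding initial_obj_def by (metis ex1_implies_ex)
lemma init_uniq: "initial_obj C Z \<Longrightarrow> f \<in> hom C Z A \<Longrightarrow> g \<in> hom C Z A \<Longrightarrow> f = g"
  unfolding initial_obj_def by (metis (no_types) ex1E)

lemma term_ex: "terminal_obj C Z \<Longrightarrow> \<exists>f. f \<in> hom C A Z"
  unfolding terminal_obj_def by (metis ex1_implies_ex)
lemma term_uniq: "terminal_obj C Z \<Longrightarrow> f \<in> hom C A Z \<Longrightarrow> g \<in> hom C A Z \<Longrightarrow> f = g"
  unfolding terminal_obj_def by (metis (no_types) ex1E)

lemma empty_cop_init: "is_coproduct C {} X S \<iota> \<Longrightarrow> initial_obj C S"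
  unfolding initial_obj_def
proof
  fix A assume a: "is_coproduct C {} X S \<iota>"
  obtain h where "h \<in> hom C S A" using cop_univ[OF a, of "\<lambda>_. undefined" A] by auto
  moreover have "\<And>k. k \<in> hom C S A \<Longrightarrow> k = h" using cop_uniq[OF a] calculation by blast
  ultimately show "\<exists>!f. f \<in> hom C S A" by blast
qed

lemma init_empty_cop: assumes "initial_obj C S" shows "is_coproduct C {} X S \<iota>"
proof (rule cop_intro)
  fix Z f show "\<exists>h. h \<in> hom C S Z \<and> (\<forall>n\<in>{}. h \<cdot> \<iota> n = f n)" using init_ex[OF assms, of Z] by blast
next
  fix Z h h' assume "h \<in> hom C S Z" "h' \<in> hom C S Z" then show "h = h'" using init_uniq[OF assms] by blast
qed auto

lemma has_init: "\<exists>Z. initial_obj C Z"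
proof -
  have "has_countable_coproducts C" using hx by (simp add: hyper_extensive_def)
  then obtain S \<iota> where "is_coproduct C {} (\<lambda>_. undefined) S \<iota>"
    unfolding has_countable_coproducts_def by blast
  then show ?thesis using empty_cop_init by blast
qed

lemma univ_def: "universal_coproducts C" using hx by (simp add: hyper_extensive_def)
lemma disj_def: "disjoint_coproducts C" using hx by (simp add: hyper_extensive_def)
lemma coh_def: "coherent_coproducts C" using hx by (simp add: hyper_extensive_def)

lemma univ_pb_ex:
  assumes "is_coproduct C I X S \<iota>" "n \<in> I" "h \<in> hom C Y S"
  shows "\<exists>P p q. is_pullback C (\<iota> n) h P p q"
  using univ_def assms unfolding universal_coproducts_def by blast

lemma univ_cop:
  assumes "is_coproduct C I X S \<iota>" "h \<in> hom C Y S" "\<And>n. n \<in> I \<Longrightarrow> is_pullback C (\<iota> n) h (P n) (p n) (q n)"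
  shows "is_coproduct C I P Y q"
proof -
  have "\<forall>P p q. (\<forall>n\<in>I. is_pullback C (\<iota> n) h (P n) (p n) (q n)) \<longrightarrow> is_coproduct C I P Y q"
    using univ_def assms(1,2) unfolding universal_coproducts_def by blast
  then show ?thesis using assms(3) by blast
qed

lemma univ_decomp:
  assumes "is_coproduct C I X S \<iota>" "h \<in> hom C Y S"
  shows "\<exists>P p q. (\<forall>n\<in>I. is_pullback C (\<iota> n) h (P n) (p n) (q n)) \<and> is_coproduct C I P Y q"
proof -
  have "\<forall>n\<in>I. \<exists>t. (case t of (P,p,q) \<Rightarrow> is_pullback C (\<iota> n) h P p q)"
    using univ_pb_ex[OF assms(1) _ assms(2)] by auto
  then obtain t where t: "\<forall>n\<in>I. (case t n of (P,p,q) \<Rightarrow> is_pullback C (\<iota> n) h P p q)"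
    by metis
  define P where "P n = fst (t n)" for n
  define p where "p n = fst (snd (t n))" for n
  define q where "q n = snd (snd (t n))" for n
  have pb: "\<And>n. n \<in> I \<Longrightarrow> is_pullback C (\<iota> n) h (P n) (p n) (q n)"
    using t unfolding P_def p_def q_def by (auto split: prod.splits)
  show ?thesis using pb univ_cop[OF assms pb] by blast
qed

lemma strict_init:
  assumes "f \<in> hom C A Z" "initial_obj C Z"
  shows "initial_obj C A"
proof -
  have c: "is_coproduct C {} (\<lambda>_. undefined) Z (\<lambda>_. undefined)" using init_empty_cop[OF assms(2)] .
  have "is_coproduct C {} (\<lambda>_. undefined) A (\<lambda>_. undefined)"
    by (rule univ_cop[OF c assms(1)]) auto
  then show ?thesis by (rule empty_cop_init)
qed

lemma pb_props:
  "is_pullback C f g P p q \<Longrightarrow> cd f = cd g" "is_pullback C f g P p q \<Longrightarrow> p \<in> hom C P (dm f)"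
  "is_pullback C f g P p q \<Longrightarrow> q \<in> hom C P (dm g)" "is_pullback C f g P p q \<Longrightarrow> f \<cdot> p = g \<cdot> q"
  unfolding is_pullback_def by (elim conjE, assumption)+

lemma pb_univ:
  assumes "is_pullback C f g P p q" "p' \<in> hom C Q (dm f)" "q' \<in> hom C Q (dm g)" "f \<cdot> p' = g \<cdot> q'"
  shows "\<exists>u. u \<in> hom C Q P \<and> p \<cdot> u = p' \<and> q \<cdot> u = q'"
proof -
  have H: "\<forall>Q p' q'. p' \<in> hom C Q (dm f) \<and> q' \<in> hom C Q (dm g) \<and> f \<cdot> p' = g \<cdot> q' \<longrightarrow>
        (\<exists>!u. u \<in> hom C Q P \<and> p \<cdot> u = p' \<and> q \<cdot> u = q')"
    using assms(1) unfolding is_pullback_def by (elim conjE)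
  have "\<exists>!u. u \<in> hom C Q P \<and> p \<cdot> u = p' \<and> q \<cdot> u = q'"
    by (rule H[rule_format]) (use assms in blast)
  then show ?thesis by (rule ex1_implies_ex)
qed

lemma pb_intro:
  assumes "cd f = cd g" "p \<in> hom C P (dm f)" "q \<in> hom C P (dm g)" "f \<cdot> p = g \<cdot> q"
    "\<And>Q p' q'. p' \<in> hom C Q (dm f) \<Longrightarrow> q' \<in> hom C Q (dm g) \<Longrightarrow> f \<cdot> p' = g \<cdot> q' \<Longrightarrow>
        \<exists>u. u \<in> hom C Q P \<and> p \<cdot> u = p' \<and> q \<cdot> u = q'"
    "\<And>Q u u'. u \<in> hom C Q P \<Longrightarrow> u' \<in> hom C Q P \<Longrightarrow> p \<cdot> u = p \<cdot> u' \<Longrightarrow> q \<cdot> u = q \<cdot> u' \<Longrightarrow> u = u'"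
  shows "is_pullback C f g P p q"
  unfolding is_pullback_def
proof (intro conjI allI impI)
  show "cd f = cd g" "p \<in> hom C P (dm f)" "q \<in> hom C P (dm g)" "f \<cdot> p = g \<cdot> q" by (rule assms)+
  fix Q p' q' assume a: "p' \<in> hom C Q (dm f) \<and> q' \<in> hom C Q (dm g) \<and> f \<cdot> p' = g \<cdot> q'"
  then obtain u where u: "u \<in> hom C Q P \<and> p \<cdot> u = p' \<and> q \<cdot> u = q'" using assms(5) by blast
  show "\<exists>!u. u \<in> hom C Q P \<and> p \<cdot> u = p' \<and> q \<cdot> u = q'"
  proof (rule ex1I[of _ u])
    show "u \<in> hom C Q P \<and> p \<cdot> u = p' \<and> q \<cdot> u = q'" by (rule u)
    fix v assume "v \<in> hom C Q P \<and> p \<cdot> v = p' \<and> q \<cdot> v = q'"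
    then show "v = u" using u assms(6)[of v Q u] by auto
  qed
qed

lemma pb_sym: "is_pullback C f g P p q \<Longrightarrow> is_pullback C g f P q p"
  unfolding is_pullback_def by (metis (no_types, lifting))

subsection \<open>Disjointness\<close>

lemma monicD: "monic C f \<Longrightarrow> f \<cdot> g = f \<cdot> h \<Longrightarrow> cd g = dm f \<Longrightarrow> cd h = dm f \<Longrightarrow> dm g = dm h \<Longrightarrow> g = h"
  unfolding monic_def by blast

lemma cop_monic: "is_coproduct C I X S \<iota> \<Longrightarrow> n \<in> I \<Longrightarrow> monic C (\<iota> n)"
  using disj_def unfolding disjoint_coproducts_def by blast

lemma cop_disj: "is_coproduct C I X S \<iota> \<Longrightarrow> n \<in> I \<Longrightarrow> m \<in> I \<Longrightarrow> n \<noteq> m \<Longrightarrow> disjoint_pair C (\<iota> n) (\<iota> m)"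
  using disj_def unfolding disjoint_coproducts_def by blast

lemma disj_cone:
  assumes "disjoint_pair C f g" "a \<in> hom C Q (dm f)" "b \<in> hom C Q (dm g)" "f \<cdot> a = g \<cdot> b"
  shows "initial_obj C Q"
proof -
  obtain P p q where pb: "is_pullback C f g P p q" and i: "initial_obj C P"
    using assms(1) unfolding disjoint_pair_def by blast
  obtain u where "u \<in> hom C Q P" using pb_univ[OF pb assms(2-4)] by blast
  then show ?thesis using strict_init i by blast
qed

lemma cop_disj_cone:
  assumes "is_coproduct C I X S \<iota>" "n \<in> I" "m \<in> I" "n \<noteq> m"
    "a \<in> hom C Q (X n)" "b \<in> hom C Q (X m)" "\<iota> n \<cdot> a = \<iota> m \<cdot> b"
  shows "initial_obj C Q"
proof -
  have "dm (\<iota> n) = X n" "dm (\<iota> m) = X m" using cop_inj[OF assms(1)] assms(2,3) by auto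
  then show ?thesis using disj_cone[OF cop_disj[OF assms(1-4)]] assms(5-7) by auto
qed

lemma bin_disj_cone:
  assumes "is_bin_coproduct C A B S i j" "a \<in> hom C Q A" "b \<in> hom C Q B" "i \<cdot> a = j \<cdot> b"
  shows "initial_obj C Q"
  using cop_disj_cone[OF bin2nat[OF assms(1)], of 0 1 a Q b] assms by simp

lemma bin_monic: "is_bin_coproduct C A B S i j \<Longrightarrow> monic C i"
  "is_bin_coproduct C A B S i j \<Longrightarrow> monic C j"
  using cop_monic[OF bin2nat, of A B S i j 0] cop_monic[OF bin2nat, of A B S i j 1] by auto

lemma inl_monic: "monic C (cop_inl C A B)" and inr_monic: "monic C (cop_inr C A B)"
  using bin_monic[OF bcop] by auto

lemma cop_all_init_iso:
  assumes "is_coproduct C I X S \<iota>" "k \<in> I" "\<And>n. n \<in> I \<Longrightarrow> n \<noteq> k \<Longrightarrow> initial_obj C (X n)"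
  shows "\<exists>\<phi>. \<phi> \<in> hom C S (X k) \<and> \<phi> \<cdot> \<iota> k = cid C (X k) \<and> \<iota> k \<cdot> \<phi> = cid C S"
proof -
  define f where "f n = (if n = k then cid C (X k) else (SOME g. g \<in> hom C (X n) (X k)))" for n
  have f: "f n \<in> hom C (X n) (X k)" if "n \<in> I" for n
  proof (cases "n = k")
    case False
    have "(SOME g. g \<in> hom C (X n) (X k)) \<in> hom C (X n) (X k)"
      by (rule someI_ex[OF init_ex[OF assms(3)[OF that False]]])
    with False show ?thesis by (simp add: f_def del: hom_iff)
  qed (simp add: f_def)
  obtain \<phi> where phi: "\<phi> \<in> hom C S (X k)" "\<forall>n\<in>I. \<phi> \<cdot> \<iota> n = f n" using cop_univ[OF assms(1) f] by blast
  have ik: "\<iota> k \<in> hom C (X k) S" using cop_inj[OF assms(1,2)] .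
  have "\<iota> k \<cdot> \<phi> = cid C S"
  proof (rule cop_uniq[OF assms(1)])
    show "\<iota> k \<cdot> \<phi> \<in> hom C S S" "cid C S \<in> hom C S S" using ik phi by auto
    fix n assume n: "n \<in> I"
    have inj: "\<iota> n \<in> hom C (X n) S" using cop_inj[OF assms(1) n] .
    show "(\<iota> k \<cdot> \<phi>) \<cdot> \<iota> n = cid C S \<cdot> \<iota> n"
    proof (cases "n = k")
      case True then show ?thesis using phi n ik by (simp add: f_def)
    next
      case False
      show ?thesis by (rule init_uniq[OF assms(3)[OF n False]]) (use ik phi inj in auto)
    qed
  qed
  moreover have "\<phi> \<cdot> \<iota> k = cid C (X k)" using phi assms(2) by (simp add: f_def)
  ultimately show ?thesis using phi by blast
qed

subsection \<open>Binary decompositions, coproduct injections\<close>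

lemma bin_decomp:
  assumes "is_bin_coproduct C A B S i j" "f \<in> hom C W S"
  shows "\<exists>W1 p1 q1 W2 p2 q2. is_pullback C i f W1 p1 q1 \<and> is_pullback C j f W2 p2 q2 \<and>
           is_bin_coproduct C W1 W2 W q1 q2"
proof -
  obtain P p q where pb: "\<forall>n\<in>{0,1}. is_pullback C (if n = 0 then i else j) f (P n) (p n) (q n)"
    and c: "is_coproduct C {0,1} P W q"
    using univ_decomp[OF bin2nat[OF assms(1)] assms(2)] by blast
  show ?thesis using pb nat2bin[OF c] by force
qed

lemma pb_inj:
  assumes "is_bin_coproduct C A B S i j" "is_pullback C i f W1 p1 q1"
  shows "\<exists>W2 q2. is_bin_coproduct C W1 W2 (dm f) q1 q2"
proof -
  have f: "f \<in> hom C (dm f) S" using pb_props(1)[OF assms(2)] bin_inj(1)[OF assms(1)] by simp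
  obtain W2 p2 q2 where pb2: "is_pullback C j f W2 p2 q2"
    using univ_pb_ex[OF bin2nat[OF assms(1)] _ f, of 1] by auto
  have "is_coproduct C {0,1} (\<lambda>n. if n = 0 then W1 else W2) (dm f) (\<lambda>n. if n = 0 then q1 else q2)"
    by (rule univ_cop[OF bin2nat[OF assms(1)] f, where p="\<lambda>n. if n = 0 then p1 else p2"])
      (use assms(2) pb2 in auto)
  from nat2bin[OF this] show ?thesis by auto
qed

lemma cinjE: "coproduct_injection C m \<Longrightarrow> (\<And>A' m'. is_bin_coproduct C (dm m) A' (cd m) m m' \<Longrightarrow> P) \<Longrightarrow> P"
  unfolding coproduct_injection_def by blast

lemma bin_cinj: "is_bin_coproduct C A B S i j \<Longrightarrow> coproduct_injection C i"
  "is_bin_coproduct C A B S i j \<Longrightarrow> coproduct_injection C j"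
  unfolding coproduct_injection_def using bin_inj bin_swap by fastforce+

lemma cinj_pb_ex:
  assumes "coproduct_injection C m" "f \<in> hom C W (cd m)"
  shows "\<exists>P p q. is_pullback C m f P p q"
proof -
  obtain A' m' where b: "is_bin_coproduct C (dm m) A' (cd m) m m'" using assms(1) by (rule cinjE)
  show ?thesis using univ_pb_ex[OF bin2nat[OF b] _ assms(2), of 0] by auto
qed

lemma cinj_pb:
  assumes "coproduct_injection C m" "is_pullback C m f P p q"
  shows "coproduct_injection C q"
proof -
  obtain A' m' where b: "is_bin_coproduct C (dm m) A' (cd m) m m'" using assms(1) by (rule cinjE)
  obtain W2 q2 where "is_bin_coproduct C P W2 (dm f) q q2" using pb_inj[OF b assms(2)] by blast
  moreover have "dm q = P" "cd q = dm f" using pb_props(3)[OF assms(2)] by auto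
  ultimately show ?thesis unfolding coproduct_injection_def by auto
qed

lemma comp_cinj:
  assumes "coproduct_injection C m1" "coproduct_injection C m2" "cd m1 = dm m2"
  shows "coproduct_injection C (m2 \<cdot> m1)"
proof -
  obtain A' m1' where b1: "is_bin_coproduct C (dm m1) A' (cd m1) m1 m1'" using assms(1) by (rule cinjE)
  obtain B' m2' where b2: "is_bin_coproduct C (dm m2) B' (cd m2) m2 m2'" using assms(2) by (rule cinjE)
  define A B D where "A = dm m1" "B = dm m2" "D = cd m2"
  have [simp]: "cd m1 = B" "dm m1' = A'" "cd m1' = B" "dm m2 = B" "cd m2 = D" "dm m2' = B'" "cd m2' = D"
    using bin_inj[OF b1] bin_inj[OF b2] assms(3) unfolding A_B_D_def by auto
  have b1: "is_bin_coproduct C A A' B m1 m1'" and b2: "is_bin_coproduct C B B' D m2 m2'"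
    using b1 b2 assms(3) unfolding A_B_D_def by auto
  have [simp]: "dm m1 = A" using A_B_D_def by simp
  define E where "E = cop_obj C A' B'"
  define m' where "m' = copair C (m2 \<cdot> m1') m2'"
  have [simp]: "dm m' = cop_obj C A' B'" "cd m' = D" unfolding m'_def by simp_all
  have m'l[simp]: "m' \<cdot> cop_inl C A' B' = m2 \<cdot> m1'" and m'r[simp]: "m' \<cdot> cop_inr C A' B' = m2'"
    unfolding m'_def by simp_all
  have "is_bin_coproduct C A E D (m2 \<cdot> m1) m'"
  proof (rule bin_intro)
    show "m2 \<cdot> m1 \<in> hom C A D" "m' \<in> hom C E D" by (simp_all add: E_def)
  next
    fix Z f g assume f: "f \<in> hom C A Z" and g: "g \<in> hom C E Z"
    obtain g1 where g1: "g1 \<in> hom C B Z" "g1 \<cdot> m1 = f" "g1 \<cdot> m1' = g \<cdot> cop_inl C A' B'"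
      using bin_univ[OF b1 f, of "g \<cdot> cop_inl C A' B'"] g unfolding E_def by auto
    obtain h where h: "h \<in> hom C D Z" "h \<cdot> m2 = g1" "h \<cdot> m2' = g \<cdot> cop_inr C A' B'"
      using bin_univ[OF b2 g1(1), of "g \<cdot> cop_inr C A' B'"] g unfolding E_def by auto
    have "h \<cdot> m' = g"
    proof (rule cop_ext[where A=A' and B=B'])
      show "h \<cdot> m' \<in> hom C (cop_obj C A' B') Z" "g \<in> hom C (cop_obj C A' B') Z" using h g by (auto simp: E_def)
      have "h \<cdot> m' \<cdot> cop_inl C A' B' = g1 \<cdot> m1'" using h by (simp add: rewr[OF h(2)])
      then show "(h \<cdot> m') \<cdot> cop_inl C A' B' = g \<cdot> cop_inl C A' B'" using h g1 by simp
      show "(h \<cdot> m') \<cdot> cop_inr C A' B' = g \<cdot> cop_inr C A' B'" using h by simp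
    qed
    moreover have "h \<cdot> (m2 \<cdot> m1) = f" using h g1 by (simp flip: assoc)
    ultimately show "\<exists>h. h \<in> hom C D Z \<and> h \<cdot> (m2 \<cdot> m1) = f \<and> h \<cdot> m' = g" using h by blast
  next
    fix Z h h' assume h: "h \<in> hom C D Z" "h' \<in> hom C D Z" "h \<cdot> (m2 \<cdot> m1) = h' \<cdot> (m2 \<cdot> m1)" "h \<cdot> m' = h' \<cdot> m'"
    have "h \<cdot> m2 = h' \<cdot> m2"
    proof (rule bin_ext[OF b1])
      show "h \<cdot> m2 \<in> hom C B Z" "h' \<cdot> m2 \<in> hom C B Z" using h by auto
      show "(h \<cdot> m2) \<cdot> m1 = (h' \<cdot> m2) \<cdot> m1" using h by simp
      have "(h \<cdot> m') \<cdot> cop_inl C A' B' = (h' \<cdot> m') \<cdot> cop_inl C A' B'" using h(4) by (rule arg_cong)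
      then show "(h \<cdot> m2) \<cdot> m1' = (h' \<cdot> m2) \<cdot> m1'" using h(1,2) by simp
    qed
    moreover have "h \<cdot> m2' = h' \<cdot> m2'"
    proof -
      have "(h \<cdot> m') \<cdot> cop_inr C A' B' = (h' \<cdot> m') \<cdot> cop_inr C A' B'" using h(4) by (rule arg_cong)
      then show ?thesis using h(1,2) by simp
    qed
    ultimately show "h = h'" using bin_ext[OF b2 h(1,2)] by blast
  qed
  moreover have "dm (m2 \<cdot> m1) = A" "cd (m2 \<cdot> m1) = D" by simp_all
  ultimately show ?thesis unfolding coproduct_injection_def by metis
qed

lemma cop_shift:
  assumes b: "is_bin_coproduct C A B S i j" and c: "is_coproduct C UNIV X A \<iota>"
  shows "is_coproduct C UNIV (case_nat B X) S (case_nat j (\<lambda>m. i \<cdot> \<iota> m))"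
proof (rule cop_intro)
  have [simp]: "dm i = A" "cd i = S" "dm j = B" "cd j = S" using bin_inj[OF b] by auto
  have [simp]: "dm (\<iota> m) = X m" "cd (\<iota> m) = A" for m using cop_inj[OF c] by auto
  show "\<And>n. n \<in> UNIV \<Longrightarrow> case_nat j (\<lambda>m. i \<cdot> \<iota> m) n \<in> hom C (case_nat B X n) S"
    by (simp split: nat.split)
next
  have [simp]: "dm i = A" "cd i = S" "dm j = B" "cd j = S" using bin_inj[OF b] by auto
  have [simp]: "dm (\<iota> m) = X m" "cd (\<iota> m) = A" for m using cop_inj[OF c] by auto
  fix Z f assume f: "\<And>n. n \<in> UNIV \<Longrightarrow> f n \<in> hom C (case_nat B X n) Z"
  obtain g where g: "g \<in> hom C A Z" "\<forall>m\<in>UNIV. g \<cdot> \<iota> m = f (Suc m)"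
    using cop_univ[OF c, of "\<lambda>m. f (Suc m)" Z] f by auto
  obtain h where h: "h \<in> hom C S Z" "h \<cdot> i = g" "h \<cdot> j = f 0"
    using bin_univ[OF b g(1), of "f 0"] f[of 0] by auto
  show "\<exists>h. h \<in> hom C S Z \<and> (\<forall>n\<in>UNIV. h \<cdot> case_nat j (\<lambda>m. i \<cdot> \<iota> m) n = f n)"
    using h g by (intro exI[of _ h]) (auto split: nat.split simp flip: assoc)
next
  have [simp]: "dm i = A" "cd i = S" "dm j = B" "cd j = S" using bin_inj[OF b] by auto
  have [simp]: "dm (\<iota> m) = X m" "cd (\<iota> m) = A" for m using cop_inj[OF c] by auto
  fix Z h h' assume h: "h \<in> hom C S Z" "h' \<in> hom C S Z"
    and e: "\<And>n. n \<in> UNIV \<Longrightarrow> h \<cdot> case_nat j (\<lambda>m. i \<cdot> \<iota> m) n = h' \<cdot> case_nat j (\<lambda>m. i \<cdot> \<iota> m) n"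
  have "h \<cdot> i = h' \<cdot> i"
    by (rule cop_uniq[OF c]) (use h e[of "Suc _"] in auto)
  moreover have "h \<cdot> j = h' \<cdot> j" using e[of 0] by simp
  ultimately show "h = h'" using bin_ext[OF b h] by blast
qed

subsection \<open>Natural numbers object\<close>

lemma nno:
  assumes c: "is_coproduct C UNIV (\<lambda>_. one) N \<iota>" and s: "s \<in> hom C N N" and si: "\<forall>n. s \<cdot> \<iota> n = \<iota> (Suc n)"
  shows "initial_alg_one_plus C one N (copair C (\<iota> 0) s)"
proof -
  have [simp]: "dm (\<iota> n) = one" "cd (\<iota> n) = N" for n using cop_inj[OF c] by auto
  have [simp]: "dm s = N" "cd s = N" using s by auto
  define a where "a = copair C (\<iota> 0) s"
  have [simp]: "dm a = cop_obj C one N" "cd a = N" unfolding a_def by simp_all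
  have al[simp]: "a \<cdot> cop_inl C one N = \<iota> 0" and ar[simp]: "a \<cdot> cop_inr C one N = s" unfolding a_def by simp_all
  have siS[simp]: "s \<cdot> \<iota> n = \<iota> (Suc n)" for n using si by blast
  have "\<exists>!h. h \<in> hom C N B \<and> h \<cdot> a = b \<cdot> cop_map C (cid C one) h" if b: "b \<in> hom C (cop_obj C one B) B" for B b
  proof -
    have [simp]: "dm b = cop_obj C one B" "cd b = B" using b by auto
    define \<beta> where "\<beta> = rec_nat (b \<cdot> cop_inl C one B) (\<lambda>n x. b \<cdot> cop_inr C one B \<cdot> x)"
    have \<beta>0: "\<beta> 0 = b \<cdot> cop_inl C one B" and \<beta>S: "\<beta> (Suc n) = b \<cdot> cop_inr C one B \<cdot> \<beta> n" for n
      unfolding \<beta>_def by simp_all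
    have \<beta>h[simp]: "dm (\<beta> n) = one \<and> cd (\<beta> n) = B" for n by (induction n) (simp_all add: \<beta>0 \<beta>S)
    obtain h where h: "h \<in> hom C N B" "\<forall>n\<in>UNIV. h \<cdot> \<iota> n = \<beta> n" using cop_univ[OF c, of \<beta> B] by auto
    have [simp]: "dm h = N" "cd h = B" using h by auto
    have hi[simp]: "h \<cdot> \<iota> n = \<beta> n" for n using h by auto
    have eq: "k \<cdot> a = b \<cdot> cop_map C (cid C one) k \<longleftrightarrow> (\<forall>n. k \<cdot> \<iota> n = \<beta> n)" if k: "k \<in> hom C N B" for k
    proof -
      have [simp]: "dm k = N" "cd k = B" using k by auto
      have L: "k \<cdot> \<iota> 0 = b \<cdot> cop_inl C one B \<longleftrightarrow> (k \<cdot> a) \<cdot> cop_inl C one N = (b \<cdot> cop_map C (cid C one) k) \<cdot> cop_inl C one N"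
        by simp
      have R: "(k \<cdot> a) \<cdot> cop_inr C one N = (b \<cdot> cop_map C (cid C one) k) \<cdot> cop_inr C one N \<longleftrightarrow> k \<cdot> s = b \<cdot> cop_inr C one B \<cdot> k"
        by simp
      show ?thesis
      proof
        assume e: "k \<cdot> a = b \<cdot> cop_map C (cid C one) k"
        have e0: "k \<cdot> \<iota> 0 = b \<cdot> cop_inl C one B" using L e by simp
        have e1: "k \<cdot> s = b \<cdot> cop_inr C one B \<cdot> k" using R e by simp
        show "\<forall>n. k \<cdot> \<iota> n = \<beta> n"
        proof
          fix n show "k \<cdot> \<iota> n = \<beta> n"
          proof (induction n)
            case 0 then show ?case using e0 \<beta>0 by simp
          next
            case (Suc n)
            have "k \<cdot> \<iota> (Suc n) = k \<cdot> s \<cdot> \<iota> n" by simp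
            also have "\<dots> = b \<cdot> cop_inr C one B \<cdot> k \<cdot> \<iota> n" using rewr[OF e1, of "\<iota> n"] by simp
            finally show ?case using Suc \<beta>S by simp
          qed
        qed
      next
        assume e: "\<forall>n. k \<cdot> \<iota> n = \<beta> n"
        have e1: "k \<cdot> s = b \<cdot> cop_inr C one B \<cdot> k"
        proof (rule cop_uniq[OF c])
          show "k \<cdot> s \<in> hom C N B" "b \<cdot> cop_inr C one B \<cdot> k \<in> hom C N B" by simp_all
          fix n show "(k \<cdot> s) \<cdot> \<iota> n = (b \<cdot> cop_inr C one B \<cdot> k) \<cdot> \<iota> n" using e \<beta>S by simp
        qed
        show "k \<cdot> a = b \<cdot> cop_map C (cid C one) k"
        proof (rule cop_ext[where A=one and B=N])
          show "k \<cdot> a \<in> hom C (cop_obj C one N) B" "b \<cdot> cop_map C (cid C one) k \<in> hom C (cop_obj C one N) B" by simp_all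
          show "(k \<cdot> a) \<cdot> cop_inl C one N = (b \<cdot> cop_map C (cid C one) k) \<cdot> cop_inl C one N"
            using L e \<beta>0 by simp
          show "(k \<cdot> a) \<cdot> cop_inr C one N = (b \<cdot> cop_map C (cid C one) k) \<cdot> cop_inr C one N"
            using R e1 by simp
        qed
      qed
    qed
    show ?thesis
    proof (rule ex1I[of _ h])
      show "h \<in> hom C N B \<and> h \<cdot> a = b \<cdot> cop_map C (cid C one) h" using eq[OF h(1)] h by auto
      fix k assume k: "k \<in> hom C N B \<and> k \<cdot> a = b \<cdot> cop_map C (cid C one) k"
      then have "\<forall>n. k \<cdot> \<iota> n = \<beta> n" using eq by blast
      then show "k = h" using cop_uniq[OF c, of k B h] k h(1) by auto
    qed
  qed
  then show ?thesis unfolding initial_alg_one_plus_def a_def[symmetric] by simp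
qed

lemma copair_inl'[simp]: "cd f = cd g \<Longrightarrow> A = dm f \<Longrightarrow> B = dm g \<Longrightarrow> cd z = A \<Longrightarrow>
    copair C f g \<cdot> (cop_inl C A B \<cdot> z) = f \<cdot> z"
  by (rule rewr) simp_all
lemma copair_inr'[simp]: "cd f = cd g \<Longrightarrow> A = dm f \<Longrightarrow> B = dm g \<Longrightarrow> cd z = B \<Longrightarrow>
    copair C f g \<cdot> (cop_inr C A B \<cdot> z) = g \<cdot> z"
  by (rule rewr) simp_all
lemma cop_map_inl'[simp]: "A = dm f \<Longrightarrow> B = dm g \<Longrightarrow> cd z = A \<Longrightarrow>
    cop_map C f g \<cdot> (cop_inl C A B \<cdot> z) = cop_inl C (cd f) (cd g) \<cdot> (f \<cdot> z)"
  by (subst rewr[of _ _ "cop_inl C (cd f) (cd g) \<cdot> f"]) simp_all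
lemma cop_map_inr'[simp]: "A = dm f \<Longrightarrow> B = dm g \<Longrightarrow> cd z = B \<Longrightarrow>
    cop_map C f g \<cdot> (cop_inr C A B \<cdot> z) = cop_inr C (cd f) (cd g) \<cdot> (g \<cdot> z)"
  by (subst rewr[of _ _ "cop_inr C (cd f) (cd g) \<cdot> g"]) simp_all

lemma cop_map_id[simp]: "cop_map C (cid C A) (cid C B) = cid C (cop_obj C A B)"
  by (rule cop_ext[where A=A and B=B]) simp_all

lemma cop_map_comp[simp]: "cd f' = dm f \<Longrightarrow> cd g' = dm g \<Longrightarrow>
    cop_map C f g \<cdot> cop_map C f' g' = cop_map C (f \<cdot> f') (g \<cdot> g')"
  by (rule cop_ext[where A="dm f'" and B="dm g'"]) simp_all

lemma cop_map_comp'[simp]: "cd f' = dm f \<Longrightarrow> cd g' = dm g \<Longrightarrow> cd z = cop_obj C (dm f') (dm g') \<Longrightarrow>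
    cop_map C f g \<cdot> (cop_map C f' g' \<cdot> z) = cop_map C (f \<cdot> f') (g \<cdot> g') \<cdot> z"
  by (subst rewr[OF cop_map_comp]) simp_all

lemma id_r'[simp]: "cd z = A \<Longrightarrow> cid C A \<cdot> z = z" by simp

subsection \<open>Terminal coalgebras give free cias\<close>

lemma tc_ex:
  assumes "terminal_coalg_plus C Y T c" "e \<in> hom C X (cop_obj C X Y)"
  shows "\<exists>h. h \<in> hom C X T \<and> c \<cdot> h = cop_map C h (cid C Y) \<cdot> e"
proof -
  have H: "\<forall>X e. e \<in> hom C X (cop_obj C X Y) \<longrightarrow>
        (\<exists>!h. h \<in> hom C X T \<and> c \<cdot> h = cop_map C h (cid C Y) \<cdot> e)"
    using assms(1) unfolding terminal_coalg_plus_def by (elim conjE)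
  have "\<exists>!h. h \<in> hom C X T \<and> c \<cdot> h = cop_map C h (cid C Y) \<cdot> e" by (rule H[rule_format]) (rule assms(2))
  then show ?thesis by (rule ex1_implies_ex)
qed

lemma tc_uniq:
  assumes "terminal_coalg_plus C Y T c" "e \<in> hom C X (cop_obj C X Y)"
    "h \<in> hom C X T" "c \<cdot> h = cop_map C h (cid C Y) \<cdot> e"
    "h' \<in> hom C X T" "c \<cdot> h' = cop_map C h' (cid C Y) \<cdot> e"
  shows "h = h'"
proof -
  have H: "\<forall>X e. e \<in> hom C X (cop_obj C X Y) \<longrightarrow>
        (\<exists>!h. h \<in> hom C X T \<and> c \<cdot> h = cop_map C h (cid C Y) \<cdot> e)"
    using assms(1) unfolding terminal_coalg_plus_def by (elim conjE)
  have "\<exists>!h. h \<in> hom C X T \<and> c \<cdot> h = cop_map C h (cid C Y) \<cdot> e" by (rule H[rule_format]) (rule assms(2))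
  then show ?thesis using assms(3-6) by blast
qed

lemma cia_ex1:
  assumes "is_cia_Id C B b" "e \<in> hom C X (cop_obj C X B)"
  shows "\<exists>!s. s \<in> hom C X B \<and> s = copair C b (cid C B) \<cdot> (cop_map C s (cid C B) \<cdot> e)"
proof -
  have H: "\<forall>X e. e \<in> hom C X (cop_obj C X B) \<longrightarrow>
        (\<exists>!s. s \<in> hom C X B \<and> s = copair C b (cid C B) \<cdot> (cop_map C s (cid C B) \<cdot> e))"
    using assms(1) unfolding is_cia_Id_def by (elim conjE)
  show ?thesis by (rule H[rule_format]) (rule assms(2))
qed

lemma cia_hom: "is_cia_Id C B b \<Longrightarrow> b \<in> hom C B B"
  unfolding is_cia_Id_def by (elim conjE)

lemma tc_free_cia:
  assumes tc: "terminal_coalg_plus C Y T c" and c: "c \<in> hom C T (cop_obj C T Y)"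
    and d: "d \<in> hom C (cop_obj C T Y) T" and cd: "c \<cdot> d = cid C (cop_obj C T Y)" and dc: "d \<cdot> c = cid C T"
  shows "is_free_cia_Id C Y T (d \<cdot> cop_inl C T Y) (d \<cdot> cop_inr C T Y)"
proof -
  define a where "a = d \<cdot> cop_inl C T Y"
  define \<eta> where "\<eta> = d \<cdot> cop_inr C T Y"
  have [simp]: "dm c = T" "cd c = cop_obj C T Y" "dm d = cop_obj C T Y" "cd d = T" using c d by auto
  have [simp]: "dm a = T" "cd a = T" "dm \<eta> = Y" "cd \<eta> = T" unfolding a_def \<eta>_def by simp_all
  have ca[simp]: "c \<cdot> a = cop_inl C T Y" and ce[simp]: "c \<cdot> \<eta> = cop_inr C T Y"
    unfolding a_def \<eta>_def using rewr[OF cd] by simp_all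
  have ca'[simp]: "cd z = T \<Longrightarrow> c \<cdot> (a \<cdot> z) = cop_inl C T Y \<cdot> z" for z using rewr[OF ca] by simp
  have ce'[simp]: "cd z = Y \<Longrightarrow> c \<cdot> (\<eta> \<cdot> z) = cop_inr C T Y \<cdot> z" for z using rewr[OF ce] by simp
  have dc'[simp]: "cd z = T \<Longrightarrow> d \<cdot> (c \<cdot> z) = z" for z using rewr[OF dc] by simp
  have dcat[simp]: "cd z = cop_obj C T Y \<Longrightarrow> c \<cdot> (d \<cdot> z) = z" for z using rewr[OF cd] by simp
  have tcid: "k = cid C T" if k: "k \<in> hom C T T" "c \<cdot> k = cop_map C k (cid C Y) \<cdot> c" for k
    using tc_uniq[OF tc c k(1,2), of "cid C T"] by simp
  have cia: "is_cia_Id C T a"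
    unfolding is_cia_Id_def
  proof (intro conjI allI impI)
    show "a \<in> hom C T T" by simp
    fix X e assume e: "e \<in> hom C X (cop_obj C X T)"
    have [simp]: "dm e = X" "cd e = cop_obj C X T" using e by auto
    define Z where "Z = cop_obj C X T"
    define i where "i = cop_inl C X T"
    define r where "r = cop_inr C X T"
    have [simp]: "dm i = X" "cd i = Z" "dm r = T" "cd r = Z" unfolding i_def r_def Z_def by simp_all
    define \<rho> where "\<rho> = copair C (cop_inl C Z Y \<cdot> i) (cop_map C r (cid C Y) \<cdot> c)"
    have [simp]: "dm \<rho> = Z" "cd \<rho> = cop_obj C Z Y" unfolding \<rho>_def by (simp_all add: Z_def i_def r_def)
    have \<rho>l[simp]: "\<rho> \<cdot> i = cop_inl C Z Y \<cdot> i" and \<rho>r[simp]: "\<rho> \<cdot> r = cop_map C r (cid C Y) \<cdot> c"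
      unfolding \<rho>_def by (simp_all add: i_def r_def Z_def)
    define f where "f = copair C (\<rho> \<cdot> e) (cop_map C r (cid C Y) \<cdot> c)"
    have [simp]: "dm f = Z" "cd f = cop_obj C Z Y" unfolding f_def by (simp_all add: Z_def)
    have fl[simp]: "f \<cdot> i = \<rho> \<cdot> e" and fr[simp]: "f \<cdot> r = cop_map C r (cid C Y) \<cdot> c"
      unfolding f_def by (simp_all add: i_def r_def Z_def)
    have f: "f \<in> hom C Z (cop_obj C Z Y)" by simp
    obtain h where h: "h \<in> hom C Z T" "c \<cdot> h = cop_map C h (cid C Y) \<cdot> f" using tc_ex[OF tc f] by blast
    have [simp]: "dm h = Z" "cd h = T" using h by auto
    have hr: "h \<cdot> r = cid C T"
    proof (rule tcid)
      show "h \<cdot> r \<in> hom C T T" by simp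
      have "c \<cdot> h \<cdot> r = cop_map C h (cid C Y) \<cdot> f \<cdot> r" using rewr[OF h(2), of r] by simp
      then show "c \<cdot> (h \<cdot> r) = cop_map C (h \<cdot> r) (cid C Y) \<cdot> c" by simp
    qed
    have hr'[simp]: "cd z = T \<Longrightarrow> h \<cdot> (r \<cdot> z) = z" for z using rewr[OF hr] by simp
    define s where "s = h \<cdot> i"
    have [simp]: "dm s = X" "cd s = T" unfolding s_def by simp_all
    have key: "d \<cdot> cop_map C h (cid C Y) \<cdot> \<rho> = copair C a (cid C T) \<cdot> cop_map C s (cid C T)"
    proof (rule cop_ext[where A=X and B=T])
      show "d \<cdot> cop_map C h (cid C Y) \<cdot> \<rho> \<in> hom C (cop_obj C X T) T" by (simp add: Z_def)
      show "copair C a (cid C T) \<cdot> cop_map C s (cid C T) \<in> hom C (cop_obj C X T) T" by simp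
      have "d \<cdot> cop_map C h (cid C Y) \<cdot> \<rho> \<cdot> i = a \<cdot> s"
        by (simp add: rewr[OF \<rho>l] Z_def a_def s_def)
      then show "(d \<cdot> cop_map C h (cid C Y) \<cdot> \<rho>) \<cdot> cop_inl C X T = (copair C a (cid C T) \<cdot> cop_map C s (cid C T)) \<cdot> cop_inl C X T"
        by (simp add: i_def Z_def)
      have "d \<cdot> cop_map C h (cid C Y) \<cdot> \<rho> \<cdot> r = cid C T"
        by (simp add: rewr[OF \<rho>r] Z_def hr dc)
      then show "(d \<cdot> cop_map C h (cid C Y) \<cdot> \<rho>) \<cdot> cop_inr C X T = (copair C a (cid C T) \<cdot> cop_map C s (cid C T)) \<cdot> cop_inr C X T"
        by (simp add: r_def Z_def)
    qed
    have sol: "s = copair C a (cid C T) \<cdot> (cop_map C s (cid C T) \<cdot> e)"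
    proof -
      have "s = d \<cdot> c \<cdot> h \<cdot> i" unfolding s_def by simp
      also have "\<dots> = d \<cdot> cop_map C h (cid C Y) \<cdot> f \<cdot> i" using rewr[OF h(2), of i] by simp
      also have "\<dots> = d \<cdot> cop_map C h (cid C Y) \<cdot> \<rho> \<cdot> e" by (simp add: rewr[OF fl])
      also have "\<dots> = (d \<cdot> cop_map C h (cid C Y) \<cdot> \<rho>) \<cdot> e" by (simp add: Z_def)
      also have "\<dots> = copair C a (cid C T) \<cdot> (cop_map C s (cid C T) \<cdot> e)" unfolding key by simp
      finally show ?thesis .
    qed
    show "\<exists>!s. s \<in> hom C X T \<and> s = copair C a (cid C T) \<cdot> (cop_map C s (cid C T) \<cdot> e)"
    proof (rule ex1I[of _ s])
      show "s \<in> hom C X T \<and> s = copair C a (cid C T) \<cdot> (cop_map C s (cid C T) \<cdot> e)" using sol by simp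
      fix s' assume s': "s' \<in> hom C X T \<and> s' = copair C a (cid C T) \<cdot> (cop_map C s' (cid C T) \<cdot> e)"
      have [simp]: "dm s' = X" "cd s' = T" using s' by auto
      define h' where "h' = copair C s' (cid C T)"
      have [simp]: "dm h' = Z" "cd h' = T" unfolding h'_def by (simp_all add: Z_def)
      have h'l[simp]: "h' \<cdot> i = s'" and h'r[simp]: "h' \<cdot> r = cid C T" unfolding h'_def by (simp_all add: i_def r_def Z_def)
      have k2: "c \<cdot> copair C a (cid C T) \<cdot> cop_map C s' (cid C T) = cop_map C h' (cid C Y) \<cdot> \<rho>"
      proof (rule cop_ext[where A=X and B=T])
        show "c \<cdot> copair C a (cid C T) \<cdot> cop_map C s' (cid C T) \<in> hom C (cop_obj C X T) (cop_obj C T Y)" by simp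
        show "cop_map C h' (cid C Y) \<cdot> \<rho> \<in> hom C (cop_obj C X T) (cop_obj C T Y)" by (simp add: Z_def)
        have "cop_map C h' (cid C Y) \<cdot> \<rho> \<cdot> i = cop_inl C T Y \<cdot> s'" by (simp add: rewr[OF \<rho>l] Z_def)
        then show "(c \<cdot> copair C a (cid C T) \<cdot> cop_map C s' (cid C T)) \<cdot> cop_inl C X T = (cop_map C h' (cid C Y) \<cdot> \<rho>) \<cdot> cop_inl C X T"
          by (simp add: i_def Z_def)
        have "cop_map C h' (cid C Y) \<cdot> \<rho> \<cdot> r = c" by (simp add: rewr[OF \<rho>r] Z_def)
        then show "(c \<cdot> copair C a (cid C T) \<cdot> cop_map C s' (cid C T)) \<cdot> cop_inr C X T = (cop_map C h' (cid C Y) \<cdot> \<rho>) \<cdot> cop_inr C X T"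
          by (simp add: r_def Z_def)
      qed
      have "c \<cdot> h' = cop_map C h' (cid C Y) \<cdot> f"
      proof (rule cop_ext[where A=X and B=T])
        show "c \<cdot> h' \<in> hom C (cop_obj C X T) (cop_obj C T Y)" "cop_map C h' (cid C Y) \<cdot> f \<in> hom C (cop_obj C X T) (cop_obj C T Y)"
          by (simp_all add: Z_def)
        have "c \<cdot> h' \<cdot> i = c \<cdot> copair C a (cid C T) \<cdot> cop_map C s' (cid C T) \<cdot> e"
          using s' by simp
        also have "\<dots> = (c \<cdot> copair C a (cid C T) \<cdot> cop_map C s' (cid C T)) \<cdot> e" by simp
        also have "\<dots> = cop_map C h' (cid C Y) \<cdot> \<rho> \<cdot> e" unfolding k2 by (simp add: Z_def)
        also have "\<dots> = cop_map C h' (cid C Y) \<cdot> f \<cdot> i" by (simp add: rewr[OF fl])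
        finally have "c \<cdot> h' \<cdot> i = cop_map C h' (cid C Y) \<cdot> f \<cdot> i" .
        then show "(c \<cdot> h') \<cdot> cop_inl C X T = (cop_map C h' (cid C Y) \<cdot> f) \<cdot> cop_inl C X T"
          by (simp add: i_def Z_def)
        have "cop_map C h' (cid C Y) \<cdot> f \<cdot> r = c" by (simp add: rewr[OF fr] Z_def)
        then show "(c \<cdot> h') \<cdot> cop_inr C X T = (cop_map C h' (cid C Y) \<cdot> f) \<cdot> cop_inr C X T"
          using h'r by (simp add: r_def Z_def)
      qed
      then have "h' = h" using tc_uniq[OF tc f _ _ h] by simp
      then show "s' = s" unfolding s_def using h'l by simp
    qed
  qed
  have free: "\<exists>!h. h \<in> hom C T B \<and> h \<cdot> a = b \<cdot> h \<and> h \<cdot> \<eta> = g"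
    if B: "is_cia_Id C B b" and g: "g \<in> hom C Y B" for B b g
  proof -
    have [simp]: "dm b = B" "cd b = B" using cia_hom[OF B] by auto
    have [simp]: "dm g = Y" "cd g = B" using g by auto
    define e' where "e' = cop_map C (cid C T) g \<cdot> c"
    have e': "e' \<in> hom C T (cop_obj C T B)" unfolding e'_def by simp
    define M where "M k = copair C b (cid C B) \<cdot> cop_map C k (cid C B) \<cdot> cop_map C (cid C T) g" for k
    have Ml: "M k \<cdot> cop_inl C T Y = b \<cdot> k" and Mr: "M k \<cdot> cop_inr C T Y = g" if "k \<in> hom C T B" for k
      using that unfolding M_def by simp_all
    have Mh: "M k \<in> hom C (cop_obj C T Y) B" if "k \<in> hom C T B" for k using that unfolding M_def by simp
    have equiv: "k = copair C b (cid C B) \<cdot> (cop_map C k (cid C B) \<cdot> e') \<longleftrightarrow> k \<cdot> a = b \<cdot> k \<and> k \<cdot> \<eta> = g"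
      if k: "k \<in> hom C T B" for k
    proof -
      have [simp]: "dm k = T" "cd k = B" using k by auto
      have Meq: "copair C b (cid C B) \<cdot> (cop_map C k (cid C B) \<cdot> e') = M k \<cdot> c"
        unfolding M_def e'_def by simp
      show ?thesis
      proof
        assume "k = copair C b (cid C B) \<cdot> (cop_map C k (cid C B) \<cdot> e')"
        then have kk: "k = M k \<cdot> c" using Meq by simp
        have "k \<cdot> a = M k \<cdot> c \<cdot> a" using kk Mh[OF k] by (metis assoc \<open>cd c = cop_obj C T Y\<close> \<open>dm a = T\<close> \<open>dm c = T\<close> \<open>cd a = T\<close> hom_iff)
        also have "\<dots> = b \<cdot> k" using Ml[OF k] by simp
        finally have 1: "k \<cdot> a = b \<cdot> k" .
        have "k \<cdot> \<eta> = M k \<cdot> c \<cdot> \<eta>" using kk Mh[OF k] by (metis assoc \<open>cd c = cop_obj C T Y\<close> \<open>dm \<eta> = Y\<close> \<open>dm c = T\<close> \<open>cd \<eta> = T\<close> hom_iff)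
        also have "\<dots> = g" using Mr[OF k] by simp
        finally show "k \<cdot> a = b \<cdot> k \<and> k \<cdot> \<eta> = g" using 1 by simp
      next
        assume kk: "k \<cdot> a = b \<cdot> k \<and> k \<cdot> \<eta> = g"
        have "k \<cdot> d = M k"
        proof (rule cop_ext[where A=T and B=Y])
          show "k \<cdot> d \<in> hom C (cop_obj C T Y) B" "M k \<in> hom C (cop_obj C T Y) B" using Mh[OF k] by simp_all
          show "(k \<cdot> d) \<cdot> cop_inl C T Y = M k \<cdot> cop_inl C T Y" using kk Ml[OF k] unfolding a_def by simp
          show "(k \<cdot> d) \<cdot> cop_inr C T Y = M k \<cdot> cop_inr C T Y" using kk Mr[OF k] unfolding \<eta>_def by simp
        qed
        then have "k = M k \<cdot> c" using rewr[OF \<open>k \<cdot> d = M k\<close>, of c] by (simp add: dc)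
        then show "k = copair C b (cid C B) \<cdot> (cop_map C k (cid C B) \<cdot> e')" using Meq by simp
      qed
    qed
    obtain s where s: "s \<in> hom C T B" "s = copair C b (cid C B) \<cdot> (cop_map C s (cid C B) \<cdot> e')"
      and su: "\<And>s'. s' \<in> hom C T B \<and> s' = copair C b (cid C B) \<cdot> (cop_map C s' (cid C B) \<cdot> e') \<Longrightarrow> s' = s"
      using cia_ex1[OF B e'] by metis
    show ?thesis
    proof (rule ex1I[of _ s])
      show "s \<in> hom C T B \<and> s \<cdot> a = b \<cdot> s \<and> s \<cdot> \<eta> = g" using s equiv by blast
      fix k assume "k \<in> hom C T B \<and> k \<cdot> a = b \<cdot> k \<and> k \<cdot> \<eta> = g"
      then show "k = s" using su equiv by blast
    qed
  qed
  show ?thesis unfolding is_free_cia_Id_def a_def[symmetric] \<eta>_def[symmetric]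
    using cia free by simp
qed


lemma prod_props: "is_product C A B P p1 p2 \<Longrightarrow> p1 \<in> hom C P A" "is_product C A B P p1 p2 \<Longrightarrow> p2 \<in> hom C P B"
  unfolding is_product_def by (elim conjE, assumption)+

lemma prod_ex1:
  assumes "is_product C A B P p1 p2" "f \<in> hom C Z A" "g \<in> hom C Z B"
  shows "\<exists>!h. h \<in> hom C Z P \<and> p1 \<cdot> h = f \<and> p2 \<cdot> h = g"
proof -
  have H: "\<forall>Z f g. f \<in> hom C Z A \<and> g \<in> hom C Z B \<longrightarrow> (\<exists>!h. h \<in> hom C Z P \<and> p1 \<cdot> h = f \<and> p2 \<cdot> h = g)"
    using assms(1) unfolding is_product_def by (elim conjE)
  show ?thesis by (rule H[rule_format]) (use assms in blast)
qed

end

locale mainctx = hx C for C :: "('o,'m) cat" +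
  fixes one N \<iota> Y P \<pi>1 \<pi>2 T k1 k2
  assumes one: "terminal_obj C one"
    and Nc: "is_coproduct C UNIV (\<lambda>_. one) N \<iota>"
    and Pp: "is_product C N Y P \<pi>1 \<pi>2"
    and Tc: "is_bin_coproduct C P one T k1 k2"
begin

definition bang where "bang A = (SOME f. f \<in> hom C A one)"

lemma bang: "dm (bang A) = A" "cd (bang A) = one"
proof -
  have "bang A \<in> hom C A one" unfolding bang_def using term_ex[OF one] by (rule someI_ex)
  then show "dm (bang A) = A" "cd (bang A) = one" by auto
qed

lemma bang_uniq: "f \<in> hom C A one \<Longrightarrow> f = bang A"
  using term_uniq[OF one] bang by auto

lemma [simp]: "dm (\<iota> n) = one" "cd (\<iota> n) = N" using cop_inj[OF Nc] by auto
lemma [simp]: "dm \<pi>1 = P" "cd \<pi>1 = N" "dm \<pi>2 = P" "cd \<pi>2 = Y" using prod_props[OF Pp] by auto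
lemma [simp]: "dm k1 = P" "cd k1 = T" "dm k2 = one" "cd k2 = T" using bin_inj[OF Tc] by auto
declare bang[simp]

definition j where "j n = (THE h. h \<in> hom C Y P \<and> \<pi>1 \<cdot> h = \<iota> n \<cdot> bang Y \<and> \<pi>2 \<cdot> h = cid C Y)"

lemma j: "j n \<in> hom C Y P" "\<pi>1 \<cdot> j n = \<iota> n \<cdot> bang Y" "\<pi>2 \<cdot> j n = cid C Y"
proof -
  have ex: "\<exists>!h. h \<in> hom C Y P \<and> \<pi>1 \<cdot> h = \<iota> n \<cdot> bang Y \<and> \<pi>2 \<cdot> h = cid C Y"
    by (rule prod_ex1[OF Pp]) simp_all
  from theI'[OF ex] show "j n \<in> hom C Y P" "\<pi>1 \<cdot> j n = \<iota> n \<cdot> bang Y" "\<pi>2 \<cdot> j n = cid C Y"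
    unfolding j_def by auto
qed

lemma j_dom[simp]: "dm (j n) = Y" and j_cod[simp]: "cd (j n) = P" using j(1) by auto

lemma j_pb: "is_pullback C (\<iota> n) \<pi>1 Y (bang Y) (j n)"
proof (rule pb_intro)
  show "cd (\<iota> n) = cd \<pi>1" "bang Y \<in> hom C Y (dm (\<iota> n))" "j n \<in> hom C Y (dm \<pi>1)" by simp_all
  show "\<iota> n \<cdot> bang Y = \<pi>1 \<cdot> j n" using j(2) by simp
next
  fix Q p' q' assume p': "p' \<in> hom C Q (dm (\<iota> n))" and q': "q' \<in> hom C Q (dm \<pi>1)" and e: "\<iota> n \<cdot> p' = \<pi>1 \<cdot> q'"
  have [simp]: "dm p' = Q" "cd p' = one" "dm q' = Q" "cd q' = P" using p' q' by auto
  have pb: "p' = bang Q" using bang_uniq[of p' Q] p' by simp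
  define u where "u = \<pi>2 \<cdot> q'"
  have [simp]: "dm u = Q" "cd u = Y" unfolding u_def by simp_all
  have "bang Y \<cdot> u = p'" using bang_uniq[of "bang Y \<cdot> u" Q] pb by simp
  moreover have "j n \<cdot> u = q'"
  proof -
    have ex: "\<exists>!h. h \<in> hom C Q P \<and> \<pi>1 \<cdot> h = \<iota> n \<cdot> bang Q \<and> \<pi>2 \<cdot> h = u"
      by (rule prod_ex1[OF Pp]) simp_all
    have "\<pi>1 \<cdot> j n \<cdot> u = \<iota> n \<cdot> bang Q"
      using rewr[OF j(2), where z=u] bang_uniq[of "bang Y \<cdot> u" Q] by simp
    moreover have "\<pi>2 \<cdot> j n \<cdot> u = u" using rewr[OF j(3), where z=u] by simp
    moreover have "\<pi>1 \<cdot> q' = \<iota> n \<cdot> bang Q" using e pb by simp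
    moreover have "\<pi>2 \<cdot> q' = u" unfolding u_def ..
    ultimately show ?thesis using ex1_uniq[OF ex, of "j n \<cdot> u" q'] by simp
  qed
  ultimately show "\<exists>u. u \<in> hom C Q Y \<and> bang Y \<cdot> u = p' \<and> j n \<cdot> u = q'" by (intro exI[of _ u]) simp
next
  fix Q u u' assume "u \<in> hom C Q Y" "u' \<in> hom C Q Y" "j n \<cdot> u = j n \<cdot> u'"
  then have "\<pi>2 \<cdot> j n \<cdot> u = \<pi>2 \<cdot> j n \<cdot> u'" by simp
  then show "u = u'" using rewr[OF j(3)] \<open>u \<in> hom C Q Y\<close> \<open>u' \<in> hom C Q Y\<close> by simp
qed

lemma Pc: "is_coproduct C UNIV (\<lambda>_. Y) P j"
proof -
  have "\<pi>1 \<in> hom C P N" by simp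
  show ?thesis by (rule univ_cop[OF Nc \<open>\<pi>1 \<in> hom C P N\<close> j_pb])
qed

definition \<kappa> where "\<kappa> = case_nat k2 (\<lambda>m. k1 \<cdot> j m)"
definition F where "F = case_nat one (\<lambda>_. Y)"

lemma TcN: "is_coproduct C UNIV F T \<kappa>"
  unfolding \<kappa>_def F_def by (rule cop_shift[OF Tc Pc])

lemma \<kappa>0[simp]: "\<kappa> 0 = k2" and \<kappa>S: "\<kappa> (Suc m) = k1 \<cdot> j m" unfolding \<kappa>_def by simp_all
lemma F0[simp]: "F 0 = one" and FS[simp]: "F (Suc m) = Y" unfolding F_def by simp_all
lemma \<kappa>_dom[simp]: "dm (\<kappa> n) = F n" and \<kappa>_cod[simp]: "cd (\<kappa> n) = T" using cop_inj[OF TcN] by auto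

abbreviation "iT \<equiv> cop_inl C T Y"
abbreviation "rT \<equiv> cop_inr C T Y"

definition fc where "fc n = (case n of 0 \<Rightarrow> iT \<cdot> k2 | Suc 0 \<Rightarrow> rT | Suc (Suc m) \<Rightarrow> iT \<cdot> \<kappa> (Suc m))"
definition c where "c = (SOME h. h \<in> hom C T (cop_obj C T Y) \<and> (\<forall>n\<in>UNIV. h \<cdot> \<kappa> n = fc n))"

lemma c: "c \<in> hom C T (cop_obj C T Y) \<and> (\<forall>n\<in>UNIV. c \<cdot> \<kappa> n = fc n)"
proof -
  have "\<exists>h. h \<in> hom C T (cop_obj C T Y) \<and> (\<forall>n\<in>UNIV. h \<cdot> \<kappa> n = fc n)"
    by (rule cop_univ[OF TcN]) (simp add: fc_def split: nat.split)
  then show ?thesis unfolding c_def by (rule someI_ex)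
qed

lemma c_dom[simp]: "dm c = T" and c_cod[simp]: "cd c = cop_obj C T Y" using c by auto
lemma c0[simp]: "c \<cdot> k2 = iT \<cdot> k2" and c1: "c \<cdot> \<kappa> (Suc 0) = rT" and cSS: "c \<cdot> \<kappa> (Suc (Suc m)) = iT \<cdot> \<kappa> (Suc m)"
  using c[THEN conjunct2, rule_format, of 0] c[THEN conjunct2, rule_format, of "Suc 0"]
    c[THEN conjunct2, rule_format, of "Suc (Suc m)"] by (simp_all add: fc_def)

definition fa where "fa n = (case n of 0 \<Rightarrow> k2 | Suc m \<Rightarrow> \<kappa> (Suc (Suc m)))"
definition aT where "aT = (SOME h. h \<in> hom C T T \<and> (\<forall>n\<in>UNIV. h \<cdot> \<kappa> n = fa n))"

lemma aT: "aT \<in> hom C T T \<and> (\<forall>n\<in>UNIV. aT \<cdot> \<kappa> n = fa n)"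
proof -
  have "\<exists>h. h \<in> hom C T T \<and> (\<forall>n\<in>UNIV. h \<cdot> \<kappa> n = fa n)"
    by (rule cop_univ[OF TcN]) (simp add: fa_def split: nat.split)
  then show ?thesis unfolding aT_def by (rule someI_ex)
qed

lemma aT_dom[simp]: "dm aT = T" and aT_cod[simp]: "cd aT = T" using aT by auto
lemma aT0[simp]: "aT \<cdot> k2 = k2" and aTS: "aT \<cdot> \<kappa> (Suc m) = \<kappa> (Suc (Suc m))"
  using aT[THEN conjunct2, rule_format, of 0] aT[THEN conjunct2, rule_format, of "Suc m"]
  by (simp_all add: fa_def)

definition d where "d = copair C aT (\<kappa> (Suc 0))"
lemma d_dom[simp]: "dm d = cop_obj C T Y" and d_cod[simp]: "cd d = T" unfolding d_def by simp_all
lemma dl[simp]: "d \<cdot> iT = aT" and dr[simp]: "d \<cdot> rT = \<kappa> (Suc 0)" unfolding d_def by simp_all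

lemma dc: "d \<cdot> c = cid C T"
proof (rule cop_uniq[OF TcN])
  show "d \<cdot> c \<in> hom C T T" "cid C T \<in> hom C T T" by simp_all
  fix n show "(d \<cdot> c) \<cdot> \<kappa> n = cid C T \<cdot> \<kappa> n"
  proof (cases n)
    case 0 then show ?thesis by (simp add: rewr[OF dl])
  next
    case (Suc m) then show ?thesis
    proof (cases m)
      case 0 then show ?thesis using Suc c1 by simp
    next
      case (Suc m') then show ?thesis using \<open>n = Suc m\<close> cSS aTS by (simp add: rewr[OF dl])
    qed
  qed
qed

lemma cd: "c \<cdot> d = cid C (cop_obj C T Y)"
proof (rule cop_ext[where A=T and B=Y])
  show "c \<cdot> d \<in> hom C (cop_obj C T Y) (cop_obj C T Y)" "cid C (cop_obj C T Y) \<in> hom C (cop_obj C T Y) (cop_obj C T Y)" by simp_all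
  have "c \<cdot> aT = iT"
  proof (rule cop_uniq[OF TcN])
    show "c \<cdot> aT \<in> hom C T (cop_obj C T Y)" "iT \<in> hom C T (cop_obj C T Y)" by simp_all
    fix n show "(c \<cdot> aT) \<cdot> \<kappa> n = iT \<cdot> \<kappa> n"
      by (cases n) (simp_all add: aTS cSS)
  qed
  then show "(c \<cdot> d) \<cdot> iT = cid C (cop_obj C T Y) \<cdot> iT" by simp
  show "(c \<cdot> d) \<cdot> rT = cid C (cop_obj C T Y) \<cdot> rT" using c1 by simp
qed

end

locale tcx = mainctx +
  fixes X e
  assumes e: "e \<in> hom C X (cop_obj C X Y)"
begin

abbreviation "iX \<equiv> cop_inl C X Y"
abbreviation "rX \<equiv> cop_inr C X Y"

lemma e_dom[simp]: "dm e = X" and e_cod[simp]: "cd e = cop_obj C X Y" using e by auto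

definition st where "st = rec_nat (SOME (P,p,q). is_pullback C rX e P p q)
   (\<lambda>n t. SOME (P,p,q). is_pullback C (iX \<cdot> snd (snd t)) e P p q)"
definition "XX n = fst (st n)"
definition "tt n = fst (snd (st n))"
definition "xx n = snd (snd (st n))"
definition "pbl n = (case n of 0 \<Rightarrow> rX | Suc m \<Rightarrow> iX \<cdot> xx m)"

lemma st_eq: "st n = (SOME (P,p,q). is_pullback C (pbl n) e P p q)"
  by (cases n) (simp_all add: st_def pbl_def xx_def)

lemma st_step:
  assumes ci: "coproduct_injection C (pbl n)" and cdp: "cd (pbl n) = cop_obj C X Y"
  shows "is_pullback C (pbl n) e (XX n) (tt n) (xx n) \<and> coproduct_injection C (xx n) \<and> cd (xx n) = X"
proof -
  have "e \<in> hom C X (cd (pbl n))" using cdp by simp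
  then obtain P0 p0 q0 where "is_pullback C (pbl n) e P0 p0 q0" using cinj_pb_ex[OF ci] by blast
  then have "\<exists>x. case x of (P,p,q) \<Rightarrow> is_pullback C (pbl n) e P p q" by auto
  then have "case st n of (P,p,q) \<Rightarrow> is_pullback C (pbl n) e P p q"
    unfolding st_eq by (rule someI_ex)
  then have pb: "is_pullback C (pbl n) e (XX n) (tt n) (xx n)"
    unfolding XX_def tt_def xx_def by (simp split: prod.splits)
  moreover have "coproduct_injection C (xx n)" using cinj_pb[OF ci pb] .
  moreover have "cd (xx n) = X" using pb_props(3)[OF pb] by simp
  ultimately show ?thesis by blast
qed

lemma st_pb_aux: "is_pullback C (pbl n) e (XX n) (tt n) (xx n) \<and> coproduct_injection C (xx n) \<and> cd (xx n) = X"
proof (induction n)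
  case 0
  show ?case by (rule st_step) (simp_all add: pbl_def bin_cinj(2)[OF bcop])
next
  case (Suc n)
  have ci: "coproduct_injection C (iX \<cdot> xx n)"
    by (rule comp_cinj) (use Suc bin_cinj(1)[OF bcop] in simp_all)
  show ?case by (rule st_step) (use Suc ci in \<open>simp_all add: pbl_def\<close>)
qed

lemma xx_pb0: "is_pullback C rX e (XX 0) (tt 0) (xx 0)"
  using st_pb_aux[of 0] by (simp add: pbl_def)
lemma xx_pbS: "is_pullback C (iX \<cdot> xx n) e (XX (Suc n)) (tt (Suc n)) (xx (Suc n))"
  using st_pb_aux[of "Suc n"] by (simp add: pbl_def)
lemma xx_cinj: "coproduct_injection C (xx n)" using st_pb_aux by blast
lemma xx_cod[simp]: "cd (xx n) = X" using st_pb_aux by blast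
lemma xx_dom[simp]: "dm (xx n) = XX n" using pb_props(3)[OF xx_pb0] pb_props(3)[OF xx_pbS] by (cases n) auto
lemma tt0[simp]: "dm (tt 0) = XX 0" "cd (tt 0) = Y" using pb_props(2)[OF xx_pb0] by auto
lemma ttS[simp]: "dm (tt (Suc n)) = XX (Suc n)" "cd (tt (Suc n)) = XX n" using pb_props(2)[OF xx_pbS[of n]] by auto
lemma e_x0: "e \<cdot> xx 0 = rX \<cdot> tt 0" using pb_props(4)[OF xx_pb0] by simp
lemma e_xS: "e \<cdot> xx (Suc n) = iX \<cdot> xx n \<cdot> tt (Suc n)" using pb_props(4)[OF xx_pbS[of n]] by simp

lemma xx_disj_cone:
  "n \<noteq> m \<Longrightarrow> a \<in> hom C Q (XX n) \<Longrightarrow> b \<in> hom C Q (XX m) \<Longrightarrow> xx n \<cdot> a = xx m \<cdot> b \<Longrightarrow> initial_obj C Q"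
proof (induction n arbitrary: m Q a b)
  case 0
  then obtain m' where m: "m = Suc m'" by (cases m) auto
  have [simp]: "dm a = Q" "cd a = XX 0" "dm b = Q" "cd b = XX (Suc m')" using 0 m by auto
  have "rX \<cdot> tt 0 \<cdot> a = e \<cdot> xx 0 \<cdot> a" using rewr[OF e_x0[symmetric], where z=a] by simp
  also have "\<dots> = e \<cdot> xx (Suc m') \<cdot> b" using 0 m by simp
  also have "\<dots> = iX \<cdot> xx m' \<cdot> tt (Suc m') \<cdot> b" using rewr[OF e_xS, where z=b] by simp
  finally show ?case by (intro bin_disj_cone[OF bin_swap[OF bcop], where a="tt 0 \<cdot> a" and b="xx m' \<cdot> tt (Suc m') \<cdot> b"]) simp_all
next
  case (Suc n)
  have [simp]: "dm a = Q" "cd a = XX (Suc n)" "dm b = Q" "cd b = XX m" using Suc by auto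
  show ?case
  proof (cases m)
    case 0
    have [simp]: "m = 0" using 0 by simp
    have "rX \<cdot> tt 0 \<cdot> b = e \<cdot> xx 0 \<cdot> b" using rewr[OF e_x0[symmetric], where z=b] by simp
    also have "\<dots> = e \<cdot> xx (Suc n) \<cdot> a" using Suc 0 by simp
    also have "\<dots> = iX \<cdot> xx n \<cdot> tt (Suc n) \<cdot> a" using rewr[OF e_xS, where z=a] by simp
    finally show ?thesis by (intro bin_disj_cone[OF bin_swap[OF bcop], where a="tt 0 \<cdot> b" and b="xx n \<cdot> tt (Suc n) \<cdot> a"]) simp_all
  next
    case (Suc m')
    have [simp]: "m = Suc m'" using Suc by simp
    have "iX \<cdot> xx n \<cdot> tt (Suc n) \<cdot> a = e \<cdot> xx (Suc n) \<cdot> a" using rewr[OF e_xS[symmetric], where z=a] by simp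
    also have "\<dots> = e \<cdot> xx (Suc m') \<cdot> b" using Suc.prems Suc by simp
    also have "\<dots> = iX \<cdot> xx m' \<cdot> tt (Suc m') \<cdot> b" using rewr[OF e_xS, where z=b] by simp
    finally have "xx n \<cdot> tt (Suc n) \<cdot> a = xx m' \<cdot> tt (Suc m') \<cdot> b"
      by (rule monicD[OF inl_monic]) simp_all
    then have "xx n \<cdot> (tt (Suc n) \<cdot> a) = xx m' \<cdot> (tt (Suc m') \<cdot> b)" by simp
    then show ?thesis using Suc.IH[of m' "tt (Suc n) \<cdot> a" Q "tt (Suc m') \<cdot> b"] Suc.prems Suc by simp
  qed
qed

lemma xx_disj: "n \<noteq> m \<Longrightarrow> disjoint_pair C (xx n) (xx m)"
proof -
  assume nm: "n \<noteq> m"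
  have "xx m \<in> hom C (XX m) (cd (xx n))" by simp
  then obtain P0 p0 q0 where pb: "is_pullback C (xx n) (xx m) P0 p0 q0" using cinj_pb_ex[OF xx_cinj] by blast
  have "initial_obj C P0" using xx_disj_cone[OF nm, of p0 P0 q0] pb_props[OF pb] by simp
  then show ?thesis unfolding disjoint_pair_def using pb by blast
qed


lemma X_decomp_ex: "\<exists>Xinf xinf. is_coproduct C UNIV (case_nat Xinf XX) X (case_nat xinf xx)"
proof -
  have "has_countable_coproducts C" using hx by (simp add: hyper_extensive_def)
  then obtain S \<sigma> where Sc: "is_coproduct C UNIV XX S \<sigma>" unfolding has_countable_coproducts_def by blast
  have [simp]: "dm (\<sigma> n) = XX n" "cd (\<sigma> n) = S" for n using cop_inj[OF Sc] by auto
  obtain hX where hX: "hX \<in> hom C S X" "\<forall>n\<in>UNIV. hX \<cdot> \<sigma> n = xx n"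
    using cop_univ[OF Sc, of xx X] by auto
  have [simp]: "dm hX = S" "cd hX = X" using hX by auto
  have H: "\<forall>I A B m. (\<forall>n\<in>I. m n \<in> hom C (A n) B \<and> coproduct_injection C (m n)) \<and>
                (\<forall>n\<in>I. \<forall>k\<in>I. n \<noteq> k \<longrightarrow> disjoint_pair C (m n) (m k)) \<longrightarrow>
        (\<forall>S \<iota> h. is_coproduct C I A S \<iota> \<and> h \<in> hom C S B \<and>
                  (\<forall>n\<in>I. h \<cdot> (\<iota> n) = m n) \<longrightarrow> coproduct_injection C h)"
    using coh_def unfolding coherent_coproducts_def .
  have pre: "(\<forall>n\<in>UNIV. xx n \<in> hom C (XX n) X \<and> coproduct_injection C (xx n)) \<and>
                (\<forall>n\<in>UNIV. \<forall>k\<in>UNIV. n \<noteq> k \<longrightarrow> disjoint_pair C (xx n) (xx k))"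
    using xx_cinj xx_disj by simp
  have "coproduct_injection C hX"
    using H[rule_format, OF pre, of S \<sigma> hX] Sc hX by blast
  then obtain Xinf xinf where b: "is_bin_coproduct C S Xinf X hX xinf" by (rule cinjE) simp
  have "is_coproduct C UNIV (case_nat Xinf XX) X (case_nat xinf (\<lambda>m. hX \<cdot> \<sigma> m))"
    by (rule cop_shift[OF b Sc])
  moreover have "case_nat xinf (\<lambda>m. hX \<cdot> \<sigma> m) = case_nat xinf xx"
    using hX by (auto split: nat.split)
  ultimately show ?thesis by auto
qed

definition "Xi = fst (SOME p. is_coproduct C UNIV (case_nat (fst p) XX) X (case_nat (snd p) xx))"
definition "xi = snd (SOME p. is_coproduct C UNIV (case_nat (fst p) XX) X (case_nat (snd p) xx))"
definition "\<kappa>X = case_nat xi xx"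

lemma Xc: "is_coproduct C UNIV (case_nat Xi XX) X \<kappa>X"
proof -
  have "\<exists>p. is_coproduct C UNIV (case_nat (fst p) XX) X (case_nat (snd p) xx)" using X_decomp_ex by auto
  from someI_ex[OF this] show ?thesis unfolding Xi_def xi_def \<kappa>X_def .
qed

lemma \<kappa>X0[simp]: "\<kappa>X 0 = xi" and \<kappa>XS[simp]: "\<kappa>X (Suc n) = xx n" unfolding \<kappa>X_def by simp_all
lemma xi_dom[simp]: "dm xi = Xi" and xi_cod[simp]: "cd xi = X"
  using cop_inj[OF Xc, of 0] by auto

lemma xi_init_cone: "a \<in> hom C Q Xi \<Longrightarrow> b \<in> hom C Q (XX m) \<Longrightarrow> xi \<cdot> a = xx m \<cdot> b \<Longrightarrow> initial_obj C Q"
  using cop_disj_cone[OF Xc, of 0 "Suc m" a Q b] by simp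

lemma E_inf: "\<exists>v. v \<in> hom C Xi Xi \<and> e \<cdot> xi = iX \<cdot> xi \<cdot> v"
proof -
  have exi: "e \<cdot> xi \<in> hom C Xi (cop_obj C X Y)" by simp
  obtain W1 p1 q1 W2 p2 q2 where pb1: "is_pullback C iX (e \<cdot> xi) W1 p1 q1"
    and pb2: "is_pullback C rX (e \<cdot> xi) W2 p2 q2" and bW: "is_bin_coproduct C W1 W2 Xi q1 q2"
    using bin_decomp[OF bcop exi] by blast
  have [simp]: "dm p1 = W1" "cd p1 = X" "dm q1 = W1" "cd q1 = Xi" using pb_props(2,3)[OF pb1] by auto
  have [simp]: "dm p2 = W2" "cd p2 = Y" "dm q2 = W2" "cd q2 = Xi" using pb_props(2,3)[OF pb2] by auto
  have e1: "iX \<cdot> p1 = e \<cdot> xi \<cdot> q1" using pb_props(4)[OF pb1] by simp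
  have e2: "rX \<cdot> p2 = e \<cdot> xi \<cdot> q2" using pb_props(4)[OF pb2] by simp
  obtain u where u: "u \<in> hom C W2 (XX 0)" "tt 0 \<cdot> u = p2" "xx 0 \<cdot> u = xi \<cdot> q2"
    using pb_univ[OF xx_pb0, of p2 W2 "xi \<cdot> q2"] e2 by auto
  have "initial_obj C W2" by (rule xi_init_cone[of q2 W2 u 0]) (use u in simp_all)
  then obtain \<phi> where \<phi>: "\<phi> \<in> hom C Xi W1" "\<phi> \<cdot> q1 = cid C W1" "q1 \<cdot> \<phi> = cid C Xi"
    using cop_all_init_iso[OF bin2nat[OF bW], of 0] by auto
  have [simp]: "dm \<phi> = Xi" "cd \<phi> = W1" using \<phi> by auto
  define g where "g = p1 \<cdot> \<phi>"
  have [simp]: "dm g = Xi" "cd g = X" unfolding g_def by simp_all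
  have eg: "e \<cdot> xi = iX \<cdot> g"
  proof -
    have "e \<cdot> xi = e \<cdot> xi \<cdot> q1 \<cdot> \<phi>" using \<phi>(3) by simp
    also have "\<dots> = iX \<cdot> p1 \<cdot> \<phi>" using rewr[OF e1[symmetric], where z=\<phi>] by simp
    finally show ?thesis unfolding g_def .
  qed
  obtain G pg qg where pbg: "\<forall>n\<in>UNIV. is_pullback C (\<kappa>X n) g (G n) (pg n) (qg n)"
    and Gc: "is_coproduct C UNIV G Xi qg"
    using univ_decomp[OF Xc, of g Xi] by auto
  have [simp]: "dm (pg n) = G n" "cd (pg n) = case_nat Xi XX n" "dm (qg n) = G n" "cd (qg n) = Xi" for n
    using pb_props(2,3)[OF pbg[rule_format, of n]] cop_inj[OF Xc, of n] by auto
  have eqg: "\<kappa>X n \<cdot> pg n = g \<cdot> qg n" for n using pb_props(4)[OF pbg[rule_format, of n]] by simp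
  have Ginit: "initial_obj C (G n)" if "n \<noteq> 0" for n
  proof -
    from that obtain m where n: "n = Suc m" using not0_implies_Suc by metis
    note n[simp]
    have "iX \<cdot> xx m \<cdot> pg n = e \<cdot> xi \<cdot> qg n"
    proof -
      have "iX \<cdot> xx m \<cdot> pg n = iX \<cdot> g \<cdot> qg n" using eqg[of n] n by simp
      also have "\<dots> = e \<cdot> xi \<cdot> qg n" using rewr[OF eg[symmetric], where z="qg n"] by simp
      finally show ?thesis .
    qed
    then obtain u where u: "u \<in> hom C (G n) (XX (Suc m))" "xx (Suc m) \<cdot> u = xi \<cdot> qg n"
      using pb_univ[OF xx_pbS[of m], of "pg n" "G n" "xi \<cdot> qg n"] by auto
    show ?thesis by (rule xi_init_cone[of "qg n" "G n" u "Suc m"]) (use u in simp_all)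
  qed
  obtain \<psi> where \<psi>: "\<psi> \<in> hom C Xi (G 0)" "\<psi> \<cdot> qg 0 = cid C (G 0)" "qg 0 \<cdot> \<psi> = cid C Xi"
    using cop_all_init_iso[OF Gc, of 0] Ginit by auto
  have [simp]: "dm \<psi> = Xi" "cd \<psi> = G 0" using \<psi> by auto
  define v where "v = pg 0 \<cdot> \<psi>"
  have [simp]: "dm v = Xi" "cd v = Xi" unfolding v_def by simp_all
  have "g = g \<cdot> qg 0 \<cdot> \<psi>" using \<psi>(3) by simp
  also have "\<dots> = xi \<cdot> pg 0 \<cdot> \<psi>" using rewr[OF eqg[of 0, symmetric], where z=\<psi>] by simp
  finally have "g = xi \<cdot> v" unfolding v_def .
  then show ?thesis using eg by (intro exI[of _ v]) simp
qed


definition "w = rec_nat (tt 0) (\<lambda>n x. x \<cdot> tt (Suc n))"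
lemma w0[simp]: "w 0 = tt 0" and wS: "w (Suc n) = w n \<cdot> tt (Suc n)" unfolding w_def by simp_all
lemma w_hom: "dm (w n) = XX n \<and> cd (w n) = Y" by (induction n) (simp_all add: wS)
lemma w_dom[simp]: "dm (w n) = XX n" and w_cod[simp]: "cd (w n) = Y" using w_hom by auto

definition "fh n = (case n of 0 \<Rightarrow> k2 \<cdot> bang Xi | Suc m \<Rightarrow> \<kappa> (Suc m) \<cdot> w m)"
definition "hh = (SOME h. h \<in> hom C X T \<and> (\<forall>n\<in>UNIV. h \<cdot> \<kappa>X n = fh n))"

lemma hh: "hh \<in> hom C X T \<and> (\<forall>n\<in>UNIV. hh \<cdot> \<kappa>X n = fh n)"
proof -
  have "\<exists>h. h \<in> hom C X T \<and> (\<forall>n\<in>UNIV. h \<cdot> \<kappa>X n = fh n)"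
    by (rule cop_univ[OF Xc]) (simp add: fh_def split: nat.split)
  then show ?thesis unfolding hh_def by (rule someI_ex)
qed

lemma hh_dom[simp]: "dm hh = X" and hh_cod[simp]: "cd hh = T" using hh by auto
lemma hh0: "hh \<cdot> xi = k2 \<cdot> bang Xi" and hhS: "hh \<cdot> xx m = \<kappa> (Suc m) \<cdot> w m"
  using hh[THEN conjunct2, rule_format, of 0] hh[THEN conjunct2, rule_format, of "Suc m"]
  by (simp_all add: fh_def)

lemma hh_coalg: "c \<cdot> hh = cop_map C hh (cid C Y) \<cdot> e"
proof (rule cop_uniq[OF Xc])
  show "c \<cdot> hh \<in> hom C X (cop_obj C T Y)" "cop_map C hh (cid C Y) \<cdot> e \<in> hom C X (cop_obj C T Y)" by simp_all
  fix n show "(c \<cdot> hh) \<cdot> \<kappa>X n = (cop_map C hh (cid C Y) \<cdot> e) \<cdot> \<kappa>X n"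
  proof (cases n)
    case 0
    obtain v where v: "v \<in> hom C Xi Xi" "e \<cdot> xi = iX \<cdot> xi \<cdot> v" using E_inf by blast
    have [simp]: "dm v = Xi" "cd v = Xi" using v by auto
    have "(c \<cdot> hh) \<cdot> xi = iT \<cdot> k2 \<cdot> bang Xi" using rewr[OF hh0, where z=xi] by (simp add: hh0 rewr[OF c0])
    moreover have "(cop_map C hh (cid C Y) \<cdot> e) \<cdot> xi = iT \<cdot> k2 \<cdot> bang Xi"
    proof -
      have "(cop_map C hh (cid C Y) \<cdot> e) \<cdot> xi = cop_map C hh (cid C Y) \<cdot> iX \<cdot> xi \<cdot> v"
        using v by simp
      also have "\<dots> = iT \<cdot> hh \<cdot> xi \<cdot> v" by simp
      also have "\<dots> = iT \<cdot> k2 \<cdot> bang Xi \<cdot> v" using rewr[OF hh0, where z=v] by simp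
      also have "bang Xi \<cdot> v = bang Xi" using bang_uniq[of "bang Xi \<cdot> v" Xi] by simp
      finally show ?thesis .
    qed
    ultimately show ?thesis using 0 by simp
  next
    case (Suc m)
    show ?thesis
    proof (cases m)
      case 0
      have "(c \<cdot> hh) \<cdot> xx 0 = rT \<cdot> tt 0" using rewr[OF c1, where z="w 0"] by (simp add: hhS)
      moreover have "(cop_map C hh (cid C Y) \<cdot> e) \<cdot> xx 0 = rT \<cdot> tt 0" by (simp add: e_x0)
      ultimately show ?thesis using Suc 0 by simp
    next
      case (Suc m')
      have "(c \<cdot> hh) \<cdot> xx (Suc m') = iT \<cdot> \<kappa> (Suc m') \<cdot> w m' \<cdot> tt (Suc m')"
        using rewr[OF cSS, where z="w (Suc m')"] by (simp add: hhS wS)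
      moreover have "(cop_map C hh (cid C Y) \<cdot> e) \<cdot> xx (Suc m') = iT \<cdot> \<kappa> (Suc m') \<cdot> w m' \<cdot> tt (Suc m')"
        by (simp add: e_xS rewr[OF hhS])
      ultimately show ?thesis using \<open>n = Suc m\<close> Suc by simp
    qed
  qed
qed

lemma hh_uniq:
  assumes h': "h' \<in> hom C X T" "c \<cdot> h' = cop_map C h' (cid C Y) \<cdot> e"
  shows "h' = hh"
proof -
  have [simp]: "dm h' = X" "cd h' = T" using h' by auto
  have dcz: "d \<cdot> (c \<cdot> z) = z" if "cd z = T" for z using rewr[OF dc, where z=z] that by simp
  have on_xx: "h' \<cdot> xx m = \<kappa> (Suc m) \<cdot> w m" for m
  proof (induction m)
    case 0
    have "c \<cdot> h' \<cdot> xx 0 = cop_map C h' (cid C Y) \<cdot> e \<cdot> xx 0" using rewr[OF h'(2), where z="xx 0"] by simp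
    also have "\<dots> = rT \<cdot> tt 0" by (simp add: e_x0)
    finally have "c \<cdot> h' \<cdot> xx 0 = rT \<cdot> tt 0" .
    then have "d \<cdot> c \<cdot> h' \<cdot> xx 0 = d \<cdot> rT \<cdot> tt 0" by simp
    then show ?case by (simp add: dcz rewr[OF dr])
  next
    case (Suc m)
    have "c \<cdot> h' \<cdot> xx (Suc m) = cop_map C h' (cid C Y) \<cdot> e \<cdot> xx (Suc m)" using rewr[OF h'(2), where z="xx (Suc m)"] by simp
    also have "\<dots> = iT \<cdot> h' \<cdot> xx m \<cdot> tt (Suc m)" by (simp add: e_xS)
    also have "\<dots> = iT \<cdot> \<kappa> (Suc m) \<cdot> w m \<cdot> tt (Suc m)" using rewr[OF Suc, where z="tt (Suc m)"] by simp
    finally have "c \<cdot> h' \<cdot> xx (Suc m) = iT \<cdot> \<kappa> (Suc m) \<cdot> w m \<cdot> tt (Suc m)" .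
    then have "d \<cdot> c \<cdot> h' \<cdot> xx (Suc m) = d \<cdot> iT \<cdot> \<kappa> (Suc m) \<cdot> w m \<cdot> tt (Suc m)" by simp
    then show ?case by (simp add: dcz rewr[OF dl] rewr[OF aTS] wS)
  qed
  obtain v where v: "v \<in> hom C Xi Xi" "e \<cdot> xi = iX \<cdot> xi \<cdot> v" using E_inf by blast
  have [simp]: "dm v = Xi" "cd v = Xi" using v by auto
  define z where "z = h' \<cdot> xi"
  have [simp]: "dm z = Xi" "cd z = T" unfolding z_def by simp_all
  have cz: "c \<cdot> z = iT \<cdot> z \<cdot> v"
  proof -
    have "c \<cdot> z = cop_map C h' (cid C Y) \<cdot> e \<cdot> xi" unfolding z_def using rewr[OF h'(2), where z=xi] by simp
    also have "\<dots> = iT \<cdot> h' \<cdot> xi \<cdot> v" using v by simp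
    finally show ?thesis unfolding z_def by simp
  qed
  have zh: "z \<in> hom C Xi T" by simp
  obtain Z pz qz where pbz: "\<forall>n\<in>UNIV. is_pullback C (\<kappa> n) z (Z n) (pz n) (qz n)"
    and Zc: "is_coproduct C UNIV Z Xi qz"
    using univ_decomp[OF TcN zh] by auto
  have [simp]: "dm (pz n) = Z n" "cd (pz n) = F n" "dm (qz n) = Z n" "cd (qz n) = Xi" for n
    using pb_props(2,3)[OF pbz[rule_format, of n]] by auto
  have eqz: "\<kappa> n \<cdot> pz n = z \<cdot> qz n" for n using pb_props(4)[OF pbz[rule_format, of n]] by simp
  have Zinit: "initial_obj C (Z (Suc m))" for m
  proof (induction m)
    case 0
    have "rT \<cdot> pz 1 = c \<cdot> \<kappa> 1 \<cdot> pz 1" using rewr[OF c1, where z="pz 1"] by simp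
    also have "\<dots> = c \<cdot> z \<cdot> qz 1" using eqz[of 1] by simp
    also have "\<dots> = iT \<cdot> z \<cdot> v \<cdot> qz 1" using rewr[OF cz, where z="qz 1"] by simp
    finally have "rT \<cdot> pz 1 = iT \<cdot> (z \<cdot> v \<cdot> qz 1)" .
    then show ?case using bin_disj_cone[OF bin_swap[OF bcop], where a="pz 1" and b="z \<cdot> v \<cdot> qz 1"] by simp
  next
    case (Suc m)
    have "iT \<cdot> \<kappa> (Suc m) \<cdot> pz (Suc (Suc m)) = c \<cdot> \<kappa> (Suc (Suc m)) \<cdot> pz (Suc (Suc m))"
      using rewr[OF cSS, where z="pz (Suc (Suc m))"] by simp
    also have "\<dots> = c \<cdot> z \<cdot> qz (Suc (Suc m))" using eqz[of "Suc (Suc m)"] by simp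
    also have "\<dots> = iT \<cdot> z \<cdot> v \<cdot> qz (Suc (Suc m))" using rewr[OF cz, where z="qz (Suc (Suc m))"] by simp
    finally have "\<kappa> (Suc m) \<cdot> pz (Suc (Suc m)) = z \<cdot> v \<cdot> qz (Suc (Suc m))"
      by (rule monicD[OF inl_monic]) simp_all
    then obtain u where "u \<in> hom C (Z (Suc (Suc m))) (Z (Suc m))"
      using pb_univ[OF pbz[rule_format, of "Suc m"], of "pz (Suc (Suc m))" "Z (Suc (Suc m))" "v \<cdot> qz (Suc (Suc m))"]
      by auto
    then show ?case using strict_init Suc.IH by blast
  qed
  have Zi: "initial_obj C (Z n)" if "n \<in> UNIV" "n \<noteq> 0" for n
  proof -
    from that(2) obtain m where "n = Suc m" using not0_implies_Suc by metis
    then show ?thesis using Zinit by simp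
  qed
  obtain \<psi> where \<psi>: "\<psi> \<in> hom C Xi (Z 0)" "\<psi> \<cdot> qz 0 = cid C (Z 0)" "qz 0 \<cdot> \<psi> = cid C Xi"
    using cop_all_init_iso[OF Zc UNIV_I[of 0] Zi] by blast
  have [simp]: "dm \<psi> = Xi" "cd \<psi> = Z 0" using \<psi> by auto
  have "z = z \<cdot> qz 0 \<cdot> \<psi>" using \<psi>(3) by simp
  also have "\<dots> = k2 \<cdot> pz 0 \<cdot> \<psi>" using rewr[OF eqz[of 0, symmetric], where z=\<psi>] by simp
  also have "pz 0 \<cdot> \<psi> = bang Xi" using bang_uniq[of "pz 0 \<cdot> \<psi>" Xi] by simp
  finally have zz: "h' \<cdot> xi = k2 \<cdot> bang Xi" unfolding z_def .
  show ?thesis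
  proof (rule cop_uniq[OF Xc])
    show "h' \<in> hom C X T" "hh \<in> hom C X T" by simp_all
    fix n show "h' \<cdot> \<kappa>X n = hh \<cdot> \<kappa>X n" by (cases n) (simp_all add: zz hh0 hhS on_xx)
  qed
qed

lemma tc_prop: "\<exists>!h. h \<in> hom C X T \<and> c \<cdot> h = cop_map C h (cid C Y) \<cdot> e"
  using hh hh_coalg hh_uniq by blast

end

context mainctx begin

lemma terminal: "terminal_coalg_plus C Y T c"
  unfolding terminal_coalg_plus_def
proof (intro conjI allI impI)
  show "c \<in> hom C T (cop_obj C T Y)" by simp
  fix X e assume "e \<in> hom C X (cop_obj C X Y)"
  then interpret tcx C one N \<iota> Y P \<pi>1 \<pi>2 T k1 k2 X e by unfold_locales
  show "\<exists>!h. h \<in> hom C X T \<and> c \<cdot> h = cop_map C h (cid C Y) \<cdot> e" by (rule tc_prop)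
qed

lemma result: "(\<exists>a \<eta>. is_free_cia_Id C Y T a \<eta>) \<and> (\<exists>c. terminal_coalg_plus C Y T c)"
  using tc_free_cia[OF terminal _ _ cd dc] terminal by auto

end

theorem mainTheorem12:
  fixes C :: "('o, 'm) cat"
  assumes "hyper_extensive C"
    and "has_binary_products C"
    and "terminal_obj C one"
    and "is_coproduct C UNIV (\<lambda>_. one) N \<iota>"
    and "s \<in> hom C N N"
    and "\<forall>n. ccomp C s (\<iota> n) = \<iota> (Suc n)"
  shows "initial_alg_one_plus C one N (copair C (\<iota> 0) s) \<and>
         (\<forall>Y P \<pi>1 \<pi>2 T k1 k2. is_product C N Y P \<pi>1 \<pi>2 \<and> is_bin_coproduct C P one T k1 k2 \<longrightarrow>
            (\<exists>a \<eta>. is_free_cia_Id C Y T a \<eta>) \<and> (\<exists>c. terminal_coalg_plus C Y T c))"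
proof -
  interpret hx C by unfold_locales (rule assms(1))
  have 1: "initial_alg_one_plus C one N (copair C (\<iota> 0) s)" by (rule nno[OF assms(4,5,6)])
  have 2: "\<forall>Y P \<pi>1 \<pi>2 T k1 k2. is_product C N Y P \<pi>1 \<pi>2 \<and> is_bin_coproduct C P one T k1 k2 \<longrightarrow>
            (\<exists>a \<eta>. is_free_cia_Id C Y T a \<eta>) \<and> (\<exists>c. terminal_coalg_plus C Y T c)"
  proof (intro allI impI)
    fix Y P \<pi>1 \<pi>2 T k1 k2
    assume h: "is_product C N Y P \<pi>1 \<pi>2 \<and> is_bin_coproduct C P one T k1 k2"
    interpret m: mainctx C one N \<iota> Y P \<pi>1 \<pi>2 T k1 k2
      by unfold_locales (use assms h in auto)
    show "(\<exists>a \<eta>. is_free_cia_Id C Y T a \<eta>) \<and> (\<exists>c. terminal_coalg_plus C Y T c)" by (rule m.result)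
  qed
  from 1 2 show ?thesis by blast
qed

end
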